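(* Let $A$ be a reproducible multiset, and let $B$ be a reproducible multiset such that $A\subseteq B\subseteq Z(\mathcal S_A)$ (inclusions of multisets, counting multiplicity), where $Z(\mathcal S_A)$ is the multiset of zeros of $\mathcal S_A$ in $\Omega$ together with its zeros at reproducible points, each listed with multiplicity (a reproducible point $\beta$ being counted $m$ times if $\mathcal S_A^{(\ell)}(\beta)=0$ for all $0\le\ell<m$ and $\beta$ is reproducible of order $m-1$). Then $\mathcal S_B$ is a constant multiple of $\mathcal S_A$.
   Context: Standing assumptions: $\Omega\subset\mathbb C$ is a domain with $0\in\Omega$, $\mathcal H$ is a Hilbert space of analytic functions on $\Omega$ with bounded point evaluations at points of $\Omega$, the shift $(Sf)(z)=zf(z)$ is bounded on $\mathcal H$, and the polynomials $\mathcal P$ are dense in $\mathcal H$. A point $\beta\in\mathbb C$ is reproducible of order $m\ge0$ if $p\mapsto p^{(m)}(\beta)$ on $\mathcal P$ extends to a bounded linear functional on $\mathcal H$; the value of the extension at $g\in\mathcal H$ is written $g^{(m)}(\beta)$ and it is represented by $k_\beta^{(m)}\in\mathcal H$. $\beta$ is a reproducible point if reproducible of order $0$; reproducibility of order $m$ implies that of all orders $j\le m$; $\operatorname{ro}(\beta)$ is the supremum of orders of reproducibility. A reproducible multiset is a finite multiset consisting of $0$ with multiplicity $m_0\ge0$ and distinct nonzero reproducible points $\beta_1,\dots,\beta_s$ with multiplicities $1\le m_j\le\operatorname{ro}(\beta_j)+1$. For vectors $u,v_1,\dots,v_N$, $D(u;v_1,\dots,v_N)$ is the formal determinant of the matrix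 with first row $(u,\langle u,v_1\rangle,\dots,\langle u,v_N\rangle)$ and $(i+1)$-st row $(v_i,\langle v_i,v_1\rangle,\dots,\langle v_i,v_N\rangle)$, expanded along the first column. The Shapiro–Shields function of a reproducible multiset $Z$ is $\mathcal S_Z=D(k_0^{(m_0)};k_0^{(m_0-1)},\dots,k_0,k_{\beta_1}^{(m_1-1)},\dots,k_{\beta_1},\dots,k_{\beta_s}^{(m_s-1)},\dots,k_{\beta_s})$. *)

theory Defs
  imports "HOL-Complex_Analysis.Complex_Analysis"
    "HOL-Computational_Algebra.Polynomial"
    "HOL-Library.Multiset"
    "HOL-Library.Extended_Nat"
begin

text \<open>A Hilbert space of analytic functions on \<Omega> is modelled by a carrier set
  H of functions complex \<Rightarrow> complex (each vanishing outside \<Omega>, so that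
  elements are identified with their restriction to \<Omega>) together with a
  complex inner product ip, linear in the first and conjugate-linear in the
  second argument.\<close>

definition hnorm :: "((complex \<Rightarrow> complex) \<Rightarrow> (complex \<Rightarrow> complex) \<Rightarrow> complex)
    \<Rightarrow> (complex \<Rightarrow> complex) \<Rightarrow> real" where
  "hnorm ip f = sqrt (Re (ip f f))"

definition polyH :: "complex set \<Rightarrow> complex poly \<Rightarrow> (complex \<Rightarrow> complex)" where
  "polyH \<Omega> p = (\<lambda>z. if z \<in> \<Omega> then poly p z else 0)"

definition analytic_hilbert_space ::
  "complex set \<Rightarrow> (complex \<Rightarrow> complex) set
     \<Rightarrow> ((complex \<Rightarrow> complex) \<Rightarrow> (complex \<Rightarrow> complex) \<Rightarrow> complex) \<Rightarrow> bool" where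
  "analytic_hilbert_space \<Omega> H ip \<longleftrightarrow>
     \<comment> \<open>\<Omega> is a domain containing 0\<close>
     open \<Omega> \<and> connected \<Omega> \<and> 0 \<in> \<Omega> \<and>
     \<comment> \<open>H is a complex vector space of analytic functions on \<Omega>\<close>
     (\<lambda>_. 0) \<in> H \<and>
     (\<forall>f\<in>H. \<forall>g\<in>H. (\<lambda>z. f z + g z) \<in> H) \<and>
     (\<forall>c. \<forall>f\<in>H. (\<lambda>z. c * f z) \<in> H) \<and>
     (\<forall>f\<in>H. f holomorphic_on \<Omega> \<and> (\<forall>z. z \<notin> \<Omega> \<longrightarrow> f z = 0)) \<and>
     \<comment> \<open>ip is an inner product on H\<close>
     (\<forall>f\<in>H. \<forall>g\<in>H. \<forall>h\<in>H. ip (\<lambda>z. f z + g z) h = ip f h + ip g h) \<and>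
     (\<forall>c. \<forall>f\<in>H. \<forall>h\<in>H. ip (\<lambda>z. c * f z) h = c * ip f h) \<and>
     (\<forall>f\<in>H. \<forall>g\<in>H. ip g f = cnj (ip f g)) \<and>
     (\<forall>f\<in>H. 0 \<le> Re (ip f f) \<and> (ip f f = 0 \<longrightarrow> f = (\<lambda>_. 0))) \<and>
     \<comment> \<open>completeness\<close>
     (\<forall>F::nat \<Rightarrow> complex \<Rightarrow> complex. (\<forall>n. F n \<in> H) \<longrightarrow>
        (\<forall>e>0. \<exists>N. \<forall>m\<ge>N. \<forall>n\<ge>N. hnorm ip (\<lambda>z. F m z - F n z) < e) \<longrightarrow>
        (\<exists>f\<in>H. (\<lambda>n. hnorm ip (\<lambda>z. F n z - f z)) \<longlonglongrightarrow> 0)) \<and>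
     \<comment> \<open>bounded point evaluations at points of \<Omega>\<close>
     (\<forall>w\<in>\<Omega>. \<exists>C. \<forall>f\<in>H. norm (f w) \<le> C * hnorm ip f) \<and>
     \<comment> \<open>bounded shift\<close>
     (\<forall>f\<in>H. (\<lambda>z. z * f z) \<in> H) \<and>
     (\<exists>C. \<forall>f\<in>H. hnorm ip (\<lambda>z. z * f z) \<le> C * hnorm ip f) \<and>
     \<comment> \<open>polynomials are in H and dense\<close>
     (\<forall>p. polyH \<Omega> p \<in> H) \<and>
     (\<forall>f\<in>H. \<forall>e>0. \<exists>p. hnorm ip (\<lambda>z. f z - polyH \<Omega> p z) < e)"

definition reproducible_order ::
  "complex set \<Rightarrow> (complex \<Rightarrow> complex) set
     \<Rightarrow> ((complex \<Rightarrow> complex) \<Rightarrow> (complex \<Rightarrow> complex) \<Rightarrow> complex)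
     \<Rightarrow> complex \<Rightarrow> nat \<Rightarrow> bool" where
  "reproducible_order \<Omega> H ip \<beta> m \<longleftrightarrow>
     (\<exists>L :: (complex \<Rightarrow> complex) \<Rightarrow> complex.
        (\<forall>f\<in>H. \<forall>g\<in>H. L (\<lambda>z. f z + g z) = L f + L g) \<and>
        (\<forall>c. \<forall>f\<in>H. L (\<lambda>z. c * f z) = c * L f) \<and>
        (\<exists>C. \<forall>f\<in>H. norm (L f) \<le> C * hnorm ip f) \<and>
        (\<forall>p. L (polyH \<Omega> p) = poly ((pderiv ^^ m) p) \<beta>))"

definition kern ::
  "complex set \<Rightarrow> (complex \<Rightarrow> complex) set
     \<Rightarrow> ((complex \<Rightarrow> complex) \<Rightarrow> (complex \<Rightarrow> complex) \<Rightarrow> complex)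
     \<Rightarrow> complex \<Rightarrow> nat \<Rightarrow> (complex \<Rightarrow> complex)" where
  "kern \<Omega> H ip \<beta> m =
     (THE k. k \<in> H \<and> (\<forall>p. ip (polyH \<Omega> p) k = poly ((pderiv ^^ m) p) \<beta>))"

text \<open>The value g^(m)(\<beta>) of the extended functional at g.\<close>
definition ext_deriv ::
  "complex set \<Rightarrow> (complex \<Rightarrow> complex) set
     \<Rightarrow> ((complex \<Rightarrow> complex) \<Rightarrow> (complex \<Rightarrow> complex) \<Rightarrow> complex)
     \<Rightarrow> (complex \<Rightarrow> complex) \<Rightarrow> complex \<Rightarrow> nat \<Rightarrow> complex" where
  "ext_deriv \<Omega> H ip g \<beta> m = ip g (kern \<Omega> H ip \<beta> m)"

definition reproducible_multiset ::
  "complex set \<Rightarrow> (complex \<Rightarrow> complex) set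
     \<Rightarrow> ((complex \<Rightarrow> complex) \<Rightarrow> (complex \<Rightarrow> complex) \<Rightarrow> complex)
     \<Rightarrow> complex multiset \<Rightarrow> bool" where
  "reproducible_multiset \<Omega> H ip Z \<longleftrightarrow>
     (\<forall>\<beta> \<in># Z. \<beta> \<noteq> 0 \<longrightarrow> reproducible_order \<Omega> H ip \<beta> (count Z \<beta> - 1))"

definition ldet :: "nat \<Rightarrow> (nat \<Rightarrow> nat \<Rightarrow> complex) \<Rightarrow> complex" where
  "ldet N a = (\<Sum>\<sigma> \<in> {\<sigma>. \<sigma> permutes {..<N}}. of_int (sign \<sigma>) * (\<Prod>i<N. a i (\<sigma> i)))"

text \<open>Formal determinant D(u; v_1, ..., v_N), expanded along the first column.
  Rows are indexed 0..N (row 0 belongs to u), the scalar columns 0..<N.\<close>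
definition formal_det ::
  "((complex \<Rightarrow> complex) \<Rightarrow> (complex \<Rightarrow> complex) \<Rightarrow> complex)
     \<Rightarrow> (complex \<Rightarrow> complex) \<Rightarrow> (complex \<Rightarrow> complex) list \<Rightarrow> (complex \<Rightarrow> complex)" where
  "formal_det ip u vs =
     (let N = length vs; w = (\<lambda>i. (u # vs) ! i);
          skip = (\<lambda>i r. if r < i then r else Suc r)
      in (\<lambda>z. \<Sum>i\<le>N. (-1) ^ i * ldet N (\<lambda>r j. ip (w (skip i r)) (vs ! j)) * w i z))"

text \<open>Shapiro--Shields function of a reproducible multiset Z. The nonzero
  points are listed in an (arbitrary, fixed) order; the result does not
  depend on this order.\<close>
definition shapiro_shields ::
  "complex set \<Rightarrow> (complex \<Rightarrow> complex) set
     \<Rightarrow> ((complex \<Rightarrow> complex) \<Rightarrow> (complex \<Rightarrow> complex) \<Rightarrow> complex)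
     \<Rightarrow> complex multiset \<Rightarrow> (complex \<Rightarrow> complex)" where
  "shapiro_shields \<Omega> H ip Z =
     (let k = kern \<Omega> H ip;
          bs = (SOME xs. distinct xs \<and> set xs = set_mset Z - {0});
          blk = (\<lambda>\<beta>. rev (map (k \<beta>) [0..<count Z \<beta>]))
      in formal_det ip (k 0 (count Z 0)) (blk 0 @ concat (map blk bs)))"

definition zero_mult ::
  "complex set \<Rightarrow> (complex \<Rightarrow> complex) set
     \<Rightarrow> ((complex \<Rightarrow> complex) \<Rightarrow> (complex \<Rightarrow> complex) \<Rightarrow> complex)
     \<Rightarrow> (complex \<Rightarrow> complex) \<Rightarrow> complex \<Rightarrow> enat" where
  "zero_mult \<Omega> H ip f \<beta> =
     (if \<beta> \<in> \<Omega> then Sup {enat m | m. \<forall>l<m. (deriv ^^ l) f \<beta> = 0}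
      else Sup {enat m | m. (m = 0 \<or> reproducible_order \<Omega> H ip \<beta> (m - 1)) \<and>
                            (\<forall>l<m. ext_deriv \<Omega> H ip f \<beta> l = 0)})"

end

theory Submission
  imports Defs Jordan_Normal_Form.Determinant
begin



lemma higher_deriv_poly: "(deriv ^^ m) (poly p) = poly ((pderiv ^^ m) p)"
proof (induction m)
  case 0 then show ?case by simp
next
  case (Suc m)
  have "(deriv ^^ Suc m) (poly p) = deriv ((deriv ^^ m) (poly p))" by simp
  also have "\<dots> = deriv (poly ((pderiv ^^ m) p))" using Suc by simp
  also have "\<dots> = poly (pderiv ((pderiv ^^ m) p))"
    by (rule ext, rule DERIV_imp_deriv, rule poly_DERIV)
  finally show ?case by simp
qed

lemma pderiv_pow_pCons0:
  "(pderiv ^^ Suc n) (pCons 0 p) = pCons 0 ((pderiv ^^ Suc n) p) + Polynomial.smult (of_nat (Suc n)) ((pderiv ^^ n) p)"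
proof (induction n)
  case 0
  then show ?case by (simp add: pderiv_pCons add.commute)
next
  case (Suc n)
  have "(pderiv ^^ Suc (Suc n)) (pCons 0 p) = pderiv ((pderiv ^^ Suc n) (pCons 0 p))" by simp
  also have "\<dots> = pderiv (pCons 0 ((pderiv ^^ Suc n) p)) + Polynomial.smult (of_nat (Suc n)) (pderiv ((pderiv ^^ n) p))"
    using Suc by (simp add: pderiv_add pderiv_smult)
  also have "pderiv (pCons 0 ((pderiv ^^ Suc n) p)) = (pderiv ^^ Suc n) p + pCons 0 ((pderiv ^^ Suc (Suc n)) p)"
    by (simp add: pderiv_pCons)
  finally show ?case by (simp add: algebra_simps smult_add_left)
qed

lemma poly_pderiv_pow_pCons0:
  "poly ((pderiv ^^ Suc n) (pCons 0 p)) b = b * poly ((pderiv ^^ Suc n) p) b + of_nat (Suc n) * poly ((pderiv ^^ n) p) b"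
  unfolding pderiv_pow_pCons0 by simp

lemma polyH_pCons0: "polyH \<Omega> (pCons 0 p) = (\<lambda>z. z * polyH \<Omega> p z)"
  unfolding polyH_def by (simp add: fun_eq_iff)



definition bsl :: "complex multiset \<Rightarrow> complex list" where
  "bsl Z = (SOME xs. distinct xs \<and> set xs = set_mset Z - {0})"

definition blkp :: "complex multiset \<Rightarrow> complex \<Rightarrow> (complex \<times> nat) list" where
  "blkp Z \<beta> = rev (map (\<lambda>j. (\<beta>, j)) [0..<count Z \<beta>])"

definition pairs :: "complex multiset \<Rightarrow> (complex \<times> nat) list" where
  "pairs Z = blkp Z 0 @ concat (map (blkp Z) (bsl Z))"

lemma bsl: "distinct (bsl Z)" "set (bsl Z) = set_mset Z - {0}"
proof -
  have "\<exists>xs. distinct xs \<and> set xs = set_mset Z - {0}"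
    using finite_distinct_list[of "set_mset Z - {0}"] by auto
  then have "distinct (bsl Z) \<and> set (bsl Z) = set_mset Z - {0}"
    unfolding bsl_def by (rule someI_ex)
  then show "distinct (bsl Z)" "set (bsl Z) = set_mset Z - {0}" by auto
qed

lemma set_blkp: "set (blkp Z \<beta>) = {(\<beta>, j) | j. j < count Z \<beta>}"
  unfolding blkp_def by auto

lemma distinct_blkp: "distinct (blkp Z \<beta>)"
  unfolding blkp_def by (simp add: distinct_map inj_on_def)

lemma distinct_blocks: "distinct bs \<Longrightarrow> distinct (concat (map (blkp Z) bs))"
proof (induction bs)
  case Nil then show ?case by simp
next
  case (Cons b bs)
  have "set (blkp Z b) \<inter> set (concat (map (blkp Z) bs)) = {}"
    using Cons.prems by (auto simp: set_blkp)
  then show ?case using Cons distinct_blkp by simp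
qed

lemma set_pairs: "set (pairs Z) = {(\<beta>, j). j < count Z \<beta>}"
proof -
  have "set (pairs Z) = set (blkp Z 0) \<union> (\<Union>\<beta>\<in>set (bsl Z). set (blkp Z \<beta>))"
    unfolding pairs_def by simp
  also have "\<dots> = {(\<beta>, j). j < count Z \<beta>}"
  proof (intro equalityI subsetI)
    fix x assume "x \<in> set (blkp Z 0) \<union> (\<Union>\<beta>\<in>set (bsl Z). set (blkp Z \<beta>))"
    then show "x \<in> {(\<beta>, j). j < count Z \<beta>}" by (auto simp: set_blkp)
  next
    fix x assume x: "x \<in> {(\<beta>, j). j < count Z \<beta>}"
    obtain \<beta> j where xb: "x = (\<beta>, j)" "j < count Z \<beta>" using x by auto
    show "x \<in> set (blkp Z 0) \<union> (\<Union>\<beta>\<in>set (bsl Z). set (blkp Z \<beta>))"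
    proof (cases "\<beta> = 0")
      case True then show ?thesis using xb by (auto simp: set_blkp)
    next
      case False
      have "\<beta> \<in># Z" using xb(2) count_eq_zero_iff[of Z \<beta>] by linarith
      then have "\<beta> \<in> set (bsl Z)" using bsl(2)[of Z] False by simp
      then show ?thesis using xb by (auto simp: set_blkp)
    qed
  qed
  finally show ?thesis .
qed

lemma distinct_pairs: "distinct (pairs Z)"
proof -
  have "set (blkp Z 0) \<inter> set (concat (map (blkp Z) (bsl Z))) = {}"
    using bsl(2)[of Z] by (auto simp: set_blkp)
  then show ?thesis unfolding pairs_def using distinct_blkp distinct_blocks[OF bsl(1)] by simp
qed

lemma shapiro_pairs:
  "shapiro_shields \<Omega> H ip Z = formal_det ip (kern \<Omega> H ip 0 (count Z 0))
      (map (\<lambda>p. kern \<Omega> H ip (fst p) (snd p)) (pairs Z))"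
  unfolding shapiro_shields_def Let_def pairs_def blkp_def bsl_def[symmetric]
  by (simp add: map_concat rev_map comp_def)

lemma sup_enat_gt: assumes "enat c \<le> Sup X" "l < c" shows "\<exists>x\<in>X. enat l < x"
proof (rule ccontr)
  assume "\<not> ?thesis"
  then have "Sup X \<le> enat l" by (intro Sup_least) (auto simp: not_less)
  then show False using assms by (metis enat_ord_simps(2) leD order_trans)
qed



lemma ldet_eq: "ldet N a = Determinant.det (Matrix.mat N N (\<lambda>(i,j). a i j))"
proof -
  have "Matrix.mat N N (\<lambda>(i,j). a i j) \<in> carrier_mat N N" by simp
  from det_def'[OF this] show ?thesis
    unfolding ldet_def by (simp add: atLeast0LessThan)
qed

lemma cofactor_expansion_zero:
  fixes e :: "nat \<Rightarrow> nat \<Rightarrow> complex"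
  assumes "j0 < N"
  shows "(\<Sum>i\<le>N. (-1)^i * ldet N (\<lambda>r j. e (if r < i then r else Suc r) j) * e i j0) = 0"
proof -
  define E where "E = Matrix.mat (Suc N) (Suc N) (\<lambda>(i,c). if c = 0 then e i j0 else e i (c - 1))"
  have E: "E \<in> carrier_mat (Suc N) (Suc N)" unfolding E_def by simp
  have "Determinant.det E = 0"
    apply (rule det_identical_columns[OF E, of 0 "Suc j0"])
    using assms by (auto simp: E_def col_mat)
  moreover have "Determinant.det E = (\<Sum>i<Suc N. E $$ (i,0) * cofactor E i 0)"
    by (rule laplace_expansion_column[OF E]) simp
  moreover have "cofactor E i 0 = (-1)^i * ldet N (\<lambda>r j. e (if r < i then r else Suc r) j)" if "i < Suc N" for i
    unfolding cofactor_def ldet_eq mat_delete_def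
    by (rule arg_cong2[where f="(*)"], simp, rule arg_cong[where f=Determinant.det])
       (auto simp: E_def)
  ultimately show ?thesis
    by (simp add: E_def lessThan_Suc_atMost[symmetric] mult.commute mult.left_commute)
qed

definition depS :: "('p \<Rightarrow> complex \<Rightarrow> complex) \<Rightarrow> 'p set \<Rightarrow> bool" where
  "depS K I \<longleftrightarrow> (\<exists>e. (\<exists>p\<in>I. e p \<noteq> 0) \<and> (\<lambda>z. \<Sum>p\<in>I. e p * K p z) = (\<lambda>_. 0))"

lemma depS_mono: assumes J: "finite J" and IJ: "I \<subseteq> J" and d: "depS K I" shows "depS K J"
proof -
  obtain e where e: "\<exists>p\<in>I. e p \<noteq> 0" "(\<lambda>z. \<Sum>p\<in>I. e p * K p z) = (\<lambda>_. 0)"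
    using d unfolding depS_def by blast
  define e' where "e' p = (if p \<in> I then e p else 0)" for p
  have "(\<lambda>z. \<Sum>p\<in>J. e' p * K p z) = (\<lambda>z. \<Sum>p\<in>I. e p * K p z)"
  proof
    fix z show "(\<Sum>p\<in>J. e' p * K p z) = (\<Sum>p\<in>I. e p * K p z)"
      by (rule sum.mono_neutral_cong_right[OF J IJ]) (simp_all add: e'_def)
  qed
  moreover have "\<exists>p\<in>J. e' p \<noteq> 0" using e(1) IJ unfolding e'_def by force
  ultimately show ?thesis unfolding depS_def using e(2) by (intro exI[of _ e']) simp
qed

lemma sum_set_nth: assumes "distinct P" shows "(\<Sum>p\<in>set P. g p) = (\<Sum>j<length P. g (P!j))"
proof -
  have inj: "inj_on ((!) P) {..<length P}" using assms by (simp add: inj_on_nth)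
  have img: "(!) P ` {..<length P} = set P" by (auto simp: in_set_conv_nth)
  show ?thesis using sum.reindex[OF inj, of g] img by simp
qed

lemma inv_nth: assumes "distinct P" "p \<in> set P"
  shows "inv_into {..<length P} ((!) P) p < length P" "P ! (inv_into {..<length P} ((!) P) p) = p"
proof -
  have img: "(!) P ` {..<length P} = set P" by (auto simp: in_set_conv_nth)
  show "inv_into {..<length P} ((!) P) p < length P" using inv_into_into[of p "(!) P" "{..<length P}"] assms img by auto
  show "P ! (inv_into {..<length P} ((!) P) p) = p" using f_inv_into_f[of p "(!) P" "{..<length P}"] assms img by auto
qed

lemma inv_nth2: assumes "distinct P" "j < length P"
  shows "inv_into {..<length P} ((!) P) (P ! j) = j"
  using inv_into_f_f[of "(!) P" "{..<length P}" j] assms by (simp add: inj_on_nth)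




locale ahs =
  fixes \<Omega> :: "complex set" and H :: "(complex \<Rightarrow> complex) set"
    and ip :: "(complex \<Rightarrow> complex) \<Rightarrow> (complex \<Rightarrow> complex) \<Rightarrow> complex"
  assumes AHS: "analytic_hilbert_space \<Omega> H ip"
begin

lemma A_open: "open \<Omega>"
  using AHS unfolding analytic_hilbert_space_def by (elim conjE) assumption
lemma A_conn: "connected \<Omega>"
  using AHS unfolding analytic_hilbert_space_def by (elim conjE) assumption
lemma zero_in: "0 \<in> \<Omega>"
  using AHS unfolding analytic_hilbert_space_def by (elim conjE) assumption
lemma zero_H[simp]: "(\<lambda>_. 0) \<in> H"
  using AHS unfolding analytic_hilbert_space_def by (elim conjE) assumption
lemma A_add: "(\<forall>f\<in>H. \<forall>g\<in>H. (\<lambda>z. f z + g z) \<in> H)"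
  using AHS unfolding analytic_hilbert_space_def by (elim conjE) assumption
lemma A_smul: "(\<forall>c. \<forall>f\<in>H. (\<lambda>z. c * f z) \<in> H)"
  using AHS unfolding analytic_hilbert_space_def by (elim conjE) assumption
lemma A_hol: "(\<forall>f\<in>H. f holomorphic_on \<Omega> \<and> (\<forall>z. z \<notin> \<Omega> \<longrightarrow> f z = 0))"
  using AHS unfolding analytic_hilbert_space_def by (elim conjE) assumption
lemma A_ipadd: "(\<forall>f\<in>H. \<forall>g\<in>H. \<forall>h\<in>H. ip (\<lambda>z. f z + g z) h = ip f h + ip g h)"
  using AHS unfolding analytic_hilbert_space_def by (elim conjE) assumption
lemma A_ipsmul: "(\<forall>c. \<forall>f\<in>H. \<forall>h\<in>H. ip (\<lambda>z. c * f z) h = c * ip f h)"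
  using AHS unfolding analytic_hilbert_space_def by (elim conjE) assumption
lemma A_ipsym: "(\<forall>f\<in>H. \<forall>g\<in>H. ip g f = cnj (ip f g))"
  using AHS unfolding analytic_hilbert_space_def by (elim conjE) assumption
lemma A_ippos: "(\<forall>f\<in>H. 0 \<le> Re (ip f f) \<and> (ip f f = 0 \<longrightarrow> f = (\<lambda>_. 0)))"
  using AHS unfolding analytic_hilbert_space_def by (elim conjE) assumption
lemma A_compl: "(\<forall>F::nat \<Rightarrow> complex \<Rightarrow> complex. (\<forall>n. F n \<in> H) \<longrightarrow>
        (\<forall>e>0. \<exists>N. \<forall>m\<ge>N. \<forall>n\<ge>N. hnorm ip (\<lambda>z. F m z - F n z) < e) \<longrightarrow>
        (\<exists>f\<in>H. (\<lambda>n. hnorm ip (\<lambda>z. F n z - f z)) \<longlonglongrightarrow> 0))"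
  using AHS unfolding analytic_hilbert_space_def by (elim conjE) assumption
lemma A_pev: "(\<forall>w\<in>\<Omega>. \<exists>C. \<forall>f\<in>H. norm (f w) \<le> C * hnorm ip f)"
  using AHS unfolding analytic_hilbert_space_def by (elim conjE) assumption
lemma A_shift: "(\<forall>f\<in>H. (\<lambda>z. z * f z) \<in> H)"
  using AHS unfolding analytic_hilbert_space_def by (elim conjE) assumption
lemma shift_bdd: "(\<exists>C. \<forall>f\<in>H. hnorm ip (\<lambda>z. z * f z) \<le> C * hnorm ip f)"
  using AHS unfolding analytic_hilbert_space_def by (elim conjE) assumption
lemma A_poly: "(\<forall>p. polyH \<Omega> p \<in> H)"
  using AHS unfolding analytic_hilbert_space_def by (elim conjE) assumption
lemma A_dense: "(\<forall>f\<in>H. \<forall>e>0. \<exists>p. hnorm ip (\<lambda>z. f z - polyH \<Omega> p z) < e)"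
  using AHS unfolding analytic_hilbert_space_def by (elim conjE) assumption

lemma add_H: "f \<in> H \<Longrightarrow> g \<in> H \<Longrightarrow> (\<lambda>z. f z + g z) \<in> H"
  using A_add by blast
lemma smul_H: "f \<in> H \<Longrightarrow> (\<lambda>z. c * f z) \<in> H"
  using A_smul by blast
lemma hol_H: "f \<in> H \<Longrightarrow> f holomorphic_on \<Omega>"
  using A_hol by blast
lemma out_H: "f \<in> H \<Longrightarrow> z \<notin> \<Omega> \<Longrightarrow> f z = 0"
  using A_hol by blast
lemma ip_add: "f \<in> H \<Longrightarrow> g \<in> H \<Longrightarrow> h \<in> H \<Longrightarrow> ip (\<lambda>z. f z + g z) h = ip f h + ip g h"
  using A_ipadd by blast
lemma ip_smul: "f \<in> H \<Longrightarrow> h \<in> H \<Longrightarrow> ip (\<lambda>z. c * f z) h = c * ip f h"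
  using A_ipsmul by blast
lemma ip_sym: "f \<in> H \<Longrightarrow> g \<in> H \<Longrightarrow> ip g f = cnj (ip f g)"
  using A_ipsym by blast
lemma ip_pos: "f \<in> H \<Longrightarrow> 0 \<le> Re (ip f f)"
  using A_ippos by blast
lemma ip_def0: "f \<in> H \<Longrightarrow> ip f f = 0 \<Longrightarrow> f = (\<lambda>_. 0)"
  using A_ippos by blast
lemma complete_H: "(\<And>n. F n \<in> H) \<Longrightarrow>
        (\<forall>e>0. \<exists>N. \<forall>m\<ge>N. \<forall>n\<ge>N. hnorm ip (\<lambda>z. F m z - F n z) < e) \<Longrightarrow>
        (\<exists>f\<in>H. (\<lambda>n. hnorm ip (\<lambda>z. F n z - f z)) \<longlonglongrightarrow> 0)"
  using A_compl by blast
lemma pev: "w \<in> \<Omega> \<Longrightarrow> \<exists>C. \<forall>f\<in>H. norm (f w) \<le> C * hnorm ip f"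
  using A_pev by blast
lemma shift_H: "f \<in> H \<Longrightarrow> (\<lambda>z. z * f z) \<in> H"
  using A_shift by blast
lemma polyH_H[simp]: "polyH \<Omega> p \<in> H"
  using A_poly by blast
lemma dense_H: "f \<in> H \<Longrightarrow> e > 0 \<Longrightarrow> \<exists>p. hnorm ip (\<lambda>z. f z - polyH \<Omega> p z) < e"
  using A_dense by blast

lemma neg_H: "f \<in> H \<Longrightarrow> (\<lambda>z. - f z) \<in> H"
  using smul_H[of f "-1"] by simp
lemma diff_H: "f \<in> H \<Longrightarrow> g \<in> H \<Longrightarrow> (\<lambda>z. f z - g z) \<in> H"
  using add_H[of f "\<lambda>z. - g z"] neg_H[of g] by simp

lemma ip_zero_left[simp]: "h \<in> H \<Longrightarrow> ip (\<lambda>_. 0) h = 0"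
  using ip_smul[of "\<lambda>_. 0" h 0] by simp
lemma ip_zero_right[simp]: "h \<in> H \<Longrightarrow> ip h (\<lambda>_. 0) = 0"
  using ip_sym[of h "\<lambda>_. 0"] by simp
lemma ip_neg: "f \<in> H \<Longrightarrow> h \<in> H \<Longrightarrow> ip (\<lambda>z. - f z) h = - ip f h"
  using ip_smul[of f h "-1"] by simp
lemma ip_diff: "f \<in> H \<Longrightarrow> g \<in> H \<Longrightarrow> h \<in> H \<Longrightarrow> ip (\<lambda>z. f z - g z) h = ip f h - ip g h"
  using ip_add[of f "\<lambda>z. - g z" h] ip_neg[of g h] neg_H[of g] by simp
lemma ip_add2: "f \<in> H \<Longrightarrow> g \<in> H \<Longrightarrow> h \<in> H \<Longrightarrow> ip h (\<lambda>z. f z + g z) = ip h f + ip h g"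
  using ip_sym[of "\<lambda>z. f z + g z" h] ip_add[of f g h] ip_sym[of f h] ip_sym[of g h] add_H[of f g] by simp
lemma ip_smul2: "f \<in> H \<Longrightarrow> h \<in> H \<Longrightarrow> ip h (\<lambda>z. c * f z) = cnj c * ip h f"
  using ip_sym[of "\<lambda>z. c * f z" h] ip_smul[of f h c] ip_sym[of f h] smul_H[of f c] by simp
lemma ip_diff2: "f \<in> H \<Longrightarrow> g \<in> H \<Longrightarrow> h \<in> H \<Longrightarrow> ip h (\<lambda>z. f z - g z) = ip h f - ip h g"
  using ip_sym[of "\<lambda>z. f z - g z" h] ip_diff[of f g h] ip_sym[of f h] ip_sym[of g h] diff_H[of f g] by simp

lemma ip_self_real: "f \<in> H \<Longrightarrow> ip f f = complex_of_real (Re (ip f f))"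
proof -
  assume f: "f \<in> H"
  have "ip f f = cnj (ip f f)" using ip_sym[OF f f] .
  from arg_cong[OF this, of Im] have "Im (ip f f) = 0" by simp
  then show ?thesis by (simp add: complex_eq_iff)
qed

lemma sum_H: "finite I \<Longrightarrow> (\<And>i. i \<in> I \<Longrightarrow> g i \<in> H) \<Longrightarrow> (\<lambda>z. \<Sum>i\<in>I. c i * g i z) \<in> H"
proof (induction I rule: finite_induct)
  case empty then show ?case by simp
next
  case (insert x F)
  have "(\<lambda>z. c x * g x z + (\<Sum>i\<in>F. c i * g i z)) \<in> H"
    using insert by (intro add_H smul_H) simp_all
  with insert show ?case by simp
qed

lemma ip_sum: "finite I \<Longrightarrow> (\<And>i. i \<in> I \<Longrightarrow> g i \<in> H) \<Longrightarrow> h \<in> H \<Longrightarrow>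
   ip (\<lambda>z. \<Sum>i\<in>I. c i * g i z) h = (\<Sum>i\<in>I. c i * ip (g i) h)"
proof (induction I rule: finite_induct)
  case empty then show ?case by simp
next
  case (insert x F)
  have "ip (\<lambda>z. c x * g x z + (\<Sum>i\<in>F. c i * g i z)) h = ip (\<lambda>z. c x * g x z) h + ip (\<lambda>z. (\<Sum>i\<in>F. c i * g i z)) h"
    using insert by (intro ip_add sum_H smul_H) simp_all
  also have "\<dots> = c x * ip (g x) h + (\<Sum>i\<in>F. c i * ip (g i) h)"
    using insert by (simp add: ip_smul)
  finally show ?case using insert by simp
qed

lemma ip_sum2: "finite I \<Longrightarrow> (\<And>i. i \<in> I \<Longrightarrow> g i \<in> H) \<Longrightarrow> h \<in> H \<Longrightarrow>
   ip h (\<lambda>z. \<Sum>i\<in>I. c i * g i z) = (\<Sum>i\<in>I. cnj (c i) * ip h (g i))"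
proof -
  assume a: "finite I" "\<And>i. i \<in> I \<Longrightarrow> g i \<in> H" "h \<in> H"
  have "ip h (\<lambda>z. \<Sum>i\<in>I. c i * g i z) = cnj (ip (\<lambda>z. \<Sum>i\<in>I. c i * g i z) h)"
    using a by (intro ip_sym sum_H) simp_all
  also have "\<dots> = (\<Sum>i\<in>I. cnj (c i) * cnj (ip (g i) h))" using a by (simp add: ip_sum)
  also have "\<dots> = (\<Sum>i\<in>I. cnj (c i) * ip h (g i))" using a ip_sym[of _ h] by simp
  finally show ?thesis .
qed

lemma hnorm_nonneg: "f \<in> H \<Longrightarrow> 0 \<le> hnorm ip f" unfolding hnorm_def using ip_pos[of f] by simp
lemma hnorm_sq: "f \<in> H \<Longrightarrow> (hnorm ip f)^2 = Re (ip f f)"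
  unfolding hnorm_def using ip_pos[of f] by simp
lemma hnorm_zero_iff: "f \<in> H \<Longrightarrow> hnorm ip f = 0 \<longleftrightarrow> f = (\<lambda>_. 0)"
proof
  assume "f \<in> H" "hnorm ip f = 0"
  then have "Re (ip f f) = 0" unfolding hnorm_def using ip_pos[of f] by simp
  then have "ip f f = 0" using ip_self_real[OF \<open>f\<in>H\<close>] by simp
  then show "f = (\<lambda>_. 0)" using ip_def0 \<open>f\<in>H\<close> by blast
qed (simp add: hnorm_def)

lemma cauchy_schwarz: assumes f: "f \<in> H" and g: "g \<in> H"
  shows "norm (ip f g) \<le> hnorm ip f * hnorm ip g"
proof (cases "g = (\<lambda>_. 0)")
  case True then show ?thesis using f hnorm_nonneg[of f] by (simp add: hnorm_def)
next
  case False
  define a where "a = Re (ip f f)"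
  define b where "b = Re (ip g g)"
  define c where "c = ip f g"
  have "b \<noteq> 0"
  proof
    assume "b = 0"
    then have "ip g g = 0" using ip_self_real[OF g] b_def by simp
    then show False using ip_def0[OF g] False by blast
  qed
  then have b0: "b > 0" using ip_pos[OF g] b_def by simp
  have a0: "a \<ge> 0" using ip_pos[OF f] a_def by simp
  define t where "t = c / complex_of_real b"
  define h where "h = (\<lambda>z. f z - t * g z)"
  have tg: "(\<lambda>z. t * g z) \<in> H" using g by (rule smul_H)
  have hH: "h \<in> H" unfolding h_def using f tg by (rule diff_H)
  have e1: "ip h k = ip f k - t * ip g k" if k: "k \<in> H" for k
    unfolding h_def using ip_diff[OF f tg k] ip_smul[OF g k] by simp
  have e2: "ip k h = ip k f - cnj t * ip k g" if k: "k \<in> H" for k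
    unfolding h_def using ip_diff2[OF f tg k] ip_smul2[OF g k] by simp
  have ff: "ip f f = of_real a" using ip_self_real[OF f] a_def by simp
  have gg: "ip g g = of_real b" using ip_self_real[OF g] b_def by simp
  have gf: "ip g f = cnj c" using ip_sym[OF f g] c_def by simp
  have ct: "cnj t = cnj c / of_real b" unfolding t_def by simp
  have B0: "complex_of_real b \<noteq> 0" using b0 by simp
  have h1: "cnj t * of_real b = cnj c" unfolding ct using B0 by simp
  have h2: "cnj t * c = c * cnj c / of_real b" unfolding ct by simp
  have "ip h h = ip f h - t * ip g h" using e1[OF hH] .
  also have "\<dots> = (ip f f - cnj t * ip f g) - t * (ip g f - cnj t * ip g g)"
    using e2[OF f] e2[OF g] by simp
  also have "\<dots> = of_real a - cnj t * c - t * (cnj c - cnj t * of_real b)"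
    using ff gg gf c_def by simp
  also have "\<dots> = of_real a - c * cnj c / of_real b"
    by (simp only: h1 h2) simp
  also have "c * cnj c = of_real ((norm c)^2)" by (rule complex_norm_square[symmetric])
  finally have "ip h h = of_real (a - (norm c)^2 / b)" by simp
  then have "Re (ip h h) = a - (norm c)^2 / b" by simp
  then have "0 \<le> a - (norm c)^2 / b" using ip_pos[OF hH] by simp
  then have "(norm c)^2 / b \<le> a" by simp
  then have "(norm c)^2 \<le> a * b" using pos_divide_le_eq[OF b0] by simp
  then have "sqrt ((norm c)^2) \<le> sqrt (a * b)" by (rule real_sqrt_le_mono)
  then have "norm c \<le> sqrt a * sqrt b" by (simp add: real_sqrt_mult)
  then show ?thesis unfolding c_def a_def b_def hnorm_def .
qed

end


context ahs begin

definition nsq where "nsq f = Re (ip f f)"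

lemma hnorm_nsq: "hnorm ip f = sqrt (nsq f)" unfolding hnorm_def nsq_def ..
lemma nsq_nonneg: "f \<in> H \<Longrightarrow> 0 \<le> nsq f" unfolding nsq_def by (rule ip_pos)
lemma nsq_hnorm: "f \<in> H \<Longrightarrow> nsq f = (hnorm ip f)^2" using hnorm_sq[of f] nsq_def by simp

lemma ip_self_nsq: "f \<in> H \<Longrightarrow> ip f f = of_real (nsq f)"
  using ip_self_real[of f] nsq_def by simp

lemma nsq_add: assumes f: "f \<in> H" and g: "g \<in> H"
  shows "nsq (\<lambda>z. f z + g z) = nsq f + 2 * Re (ip f g) + nsq g"
proof -
  have fg: "(\<lambda>z. f z + g z) \<in> H" using f g by (rule add_H)
  have "ip (\<lambda>z. f z + g z) (\<lambda>z. f z + g z) = ip f (\<lambda>z. f z + g z) + ip g (\<lambda>z. f z + g z)"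
    by (rule ip_add[OF f g fg])
  also have "\<dots> = ip f f + ip f g + (ip g f + ip g g)" using ip_add2[OF f g f] ip_add2[OF f g g] by simp
  finally have "nsq (\<lambda>z. f z + g z) = Re (ip f f) + Re (ip f g) + Re (ip g f) + Re (ip g g)"
    unfolding nsq_def by simp
  moreover have "Re (ip g f) = Re (ip f g)" using ip_sym[OF f g] by simp
  ultimately show ?thesis unfolding nsq_def by simp
qed

lemma nsq_smul: assumes f: "f \<in> H" shows "nsq (\<lambda>z. c * f z) = (norm c)^2 * nsq f"
proof -
  have cf: "(\<lambda>z. c * f z) \<in> H" using f by (rule smul_H)
  have "ip (\<lambda>z. c * f z) (\<lambda>z. c * f z) = c * (cnj c * ip f f)"
    using ip_smul[OF f cf] ip_smul2[OF f f] by simp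
  also have "\<dots> = (c * cnj c) * ip f f" by (simp add: mult.assoc)
  also have "c * cnj c = of_real ((norm c)^2)" by (rule complex_norm_square[symmetric])
  finally have "ip (\<lambda>z. c * f z) (\<lambda>z. c * f z) = of_real ((norm c)^2) * ip f f" .
  then show ?thesis unfolding nsq_def using ip_self_real[OF f] by (simp del: of_real_power)
qed

lemma hnorm_smul: assumes f: "f \<in> H" shows "hnorm ip (\<lambda>z. c * f z) = norm c * hnorm ip f"
  unfolding hnorm_nsq nsq_smul[OF f] by (simp add: real_sqrt_mult)

lemma hnorm_triangle: assumes f: "f \<in> H" and g: "g \<in> H"
  shows "hnorm ip (\<lambda>z. f z + g z) \<le> hnorm ip f + hnorm ip g"
proof -
  have fg: "(\<lambda>z. f z + g z) \<in> H" using f g by (rule add_H)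
  have "Re (ip f g) \<le> norm (ip f g)" by (rule complex_Re_le_cmod)
  also have "\<dots> \<le> hnorm ip f * hnorm ip g" by (rule cauchy_schwarz[OF f g])
  finally have "nsq (\<lambda>z. f z + g z) \<le> (hnorm ip f + hnorm ip g)^2"
    unfolding nsq_add[OF f g] nsq_hnorm[OF f] nsq_hnorm[OF g] by (simp add: power2_sum)
  then have "(hnorm ip (\<lambda>z. f z + g z))^2 \<le> (hnorm ip f + hnorm ip g)^2"
    using nsq_hnorm[OF fg] by simp
  then show ?thesis
    using hnorm_nonneg[OF f] hnorm_nonneg[OF g] hnorm_nonneg[OF fg] power2_le_imp_le by fastforce
qed

lemma hnorm_diff_commute: assumes f: "f \<in> H" and g: "g \<in> H"
  shows "hnorm ip (\<lambda>z. f z - g z) = hnorm ip (\<lambda>z. g z - f z)"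
proof -
  have "(\<lambda>z. g z - f z) = (\<lambda>z. (-1) * (f z - g z))" by (simp add: fun_eq_iff)
  then show ?thesis using hnorm_smul[of "\<lambda>z. f z - g z" "-1"] diff_H[OF f g] by simp
qed

lemma hnorm_diff_triangle: assumes f: "f \<in> H" and g: "g \<in> H" and h: "h \<in> H"
  shows "hnorm ip (\<lambda>z. f z - h z) \<le> hnorm ip (\<lambda>z. f z - g z) + hnorm ip (\<lambda>z. g z - h z)"
proof -
  have "(\<lambda>z. f z - h z) = (\<lambda>z. (f z - g z) + (g z - h z))" by (simp add: fun_eq_iff)
  then show ?thesis using hnorm_triangle[OF diff_H[OF f g] diff_H[OF g h]] by simp
qed

lemma hnorm_zero[simp]: "hnorm ip (\<lambda>_. 0) = 0"
  using hnorm_zero_iff[of "\<lambda>_. 0"] by simp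

lemma parallelogram: assumes f: "f \<in> H" and g: "g \<in> H"
  shows "nsq (\<lambda>z. f z + g z) + nsq (\<lambda>z. f z - g z) = 2 * nsq f + 2 * nsq g"
proof -
  have "(\<lambda>z. f z - g z) = (\<lambda>z. f z + (-1) * g z)" by (simp add: fun_eq_iff)
  then have "nsq (\<lambda>z. f z - g z) = nsq f + 2 * Re (ip f (\<lambda>z. (-1) * g z)) + nsq (\<lambda>z. (-1) * g z)"
    using nsq_add[OF f smul_H[OF g, of "-1"]] by simp
  also have "\<dots> = nsq f - 2 * Re (ip f g) + nsq g"
    using ip_smul2[OF g f, of "-1"] nsq_smul[OF g, of "-1"] by simp
  finally show ?thesis using nsq_add[OF f g] by simp
qed

end


context ahs begin

lemma riesz:
  assumes Ladd: "\<And>f g. f \<in> H \<Longrightarrow> g \<in> H \<Longrightarrow> L (\<lambda>z. f z + g z) = L f + L g"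
    and Lsmul: "\<And>c f. f \<in> H \<Longrightarrow> L (\<lambda>z. c * f z) = c * L f"
    and Lbdd: "\<And>f. f \<in> H \<Longrightarrow> norm (L f) \<le> C * hnorm ip f"
  shows "\<exists>k\<in>H. \<forall>f\<in>H. L f = ip f k"
proof (cases "\<forall>f\<in>H. L f = 0")
  case True
  then show ?thesis by (intro bexI[of _ "\<lambda>_. 0"]) simp_all
next
  case False
  have Ldiff: "L (\<lambda>z. f z - g z) = L f - L g" if "f \<in> H" "g \<in> H" for f g
  proof -
    have "(\<lambda>z. f z - g z) = (\<lambda>z. f z + (-1) * g z)" by (simp add: fun_eq_iff)
    then show ?thesis using Ladd[OF that(1) smul_H[OF that(2), of "-1"]] Lsmul[OF that(2), of "-1"] by simp
  qed
  have L0: "L (\<lambda>_. 0) = 0" using Lsmul[OF zero_H, of 0] by simp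
  obtain f1 where f1: "f1 \<in> H" "L f1 \<noteq> 0" using False by blast
  define M where "M = {g \<in> H. L g = 1}"
  have g1H: "(\<lambda>z. (1 / L f1) * f1 z) \<in> H" by (rule smul_H[OF f1(1)])
  have g1L: "L (\<lambda>z. (1 / L f1) * f1 z) = 1" using Lsmul[OF f1(1), of "1 / L f1"] f1(2) by simp
  have g1: "(\<lambda>z. (1 / L f1) * f1 z) \<in> M" unfolding M_def using g1H g1L by blast
  define \<delta> where "\<delta> = Inf (hnorm ip ` M)"
  have bdd: "bdd_below (hnorm ip ` M)" unfolding M_def by (rule bdd_belowI[of _ 0]) (auto intro: hnorm_nonneg)
  have \<delta>le: "\<delta> \<le> hnorm ip g" if "g \<in> M" for g
    unfolding \<delta>_def using that bdd by (simp add: cInf_lower)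
  have \<delta>0: "0 \<le> \<delta>" unfolding \<delta>_def
  proof (rule cInf_greatest)
    show "hnorm ip ` M \<noteq> {}" using g1 by blast
  next
    fix x assume "x \<in> hnorm ip ` M" then show "0 \<le> x" unfolding M_def using hnorm_nonneg by auto
  qed
  have "\<exists>g\<in>M. hnorm ip g < \<delta> + inverse (real (Suc n))" for n
  proof -
    have "Inf (hnorm ip ` M) < \<delta> + inverse (real (Suc n))" unfolding \<delta>_def by simp
    then obtain y where "y \<in> hnorm ip ` M" "y < \<delta> + inverse (real (Suc n))"
      using cInf_lessD[of "hnorm ip ` M"] g1 by blast
    then show ?thesis by blast
  qed
  then obtain g where gM: "\<And>n. g n \<in> M" and gn: "\<And>n. hnorm ip (g n) < \<delta> + inverse (real (Suc n))"
    by metis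
  have gH: "g n \<in> H" for n using gM[of n] unfolding M_def by simp
  have gL: "L (g n) = 1" for n using gM[of n] unfolding M_def by simp
  have key: "nsq (\<lambda>z. g n z - g m z) \<le> (4 * \<delta> + 2) * (inverse (real (Suc n)) + inverse (real (Suc m)))" for n m
  proof -
    define h where "h = (\<lambda>z. (1/2) * (g n z + g m z))"
    have hH: "h \<in> H" unfolding h_def using gH by (intro smul_H add_H)
    have "L h = 1" unfolding h_def using Lsmul[OF add_H[OF gH[of n] gH[of m]], of "1/2"] Ladd[OF gH[of n] gH[of m]] gL[of n] gL[of m] by simp
    then have "\<delta> \<le> hnorm ip h" using hH \<delta>le M_def by simp
    have "(\<lambda>z. g n z + g m z) = (\<lambda>z. 2 * h z)" unfolding h_def by (simp add: fun_eq_iff)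
    then have "nsq (\<lambda>z. g n z + g m z) = 4 * nsq h" using nsq_smul[OF hH, of 2] by simp
    also have "4 * nsq h \<ge> 4 * \<delta>^2" using \<open>\<delta> \<le> hnorm ip h\<close> \<delta>0 nsq_hnorm[OF hH] by (simp add: power_mono)
    finally have s: "nsq (\<lambda>z. g n z + g m z) \<ge> 4 * \<delta>^2" .
    define a where "a = inverse (real (Suc n))"
    define b where "b = inverse (real (Suc m))"
    have a01: "0 \<le> a" "a \<le> 1" unfolding a_def by (simp_all add: field_simps)
    have b01: "0 \<le> b" "b \<le> 1" unfolding b_def by (simp_all add: field_simps)
    have "nsq (g n) \<le> (\<delta> + a)^2" using gn[of n] hnorm_nonneg[OF gH] nsq_hnorm[OF gH] a_def
      by (simp add: power_mono)
    moreover have "nsq (g m) \<le> (\<delta> + b)^2" using gn[of m] hnorm_nonneg[OF gH] nsq_hnorm[OF gH] b_def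
      by (simp add: power_mono)
    ultimately have "nsq (\<lambda>z. g n z - g m z) \<le> 2 * (\<delta> + a)^2 + 2 * (\<delta> + b)^2 - 4 * \<delta>^2"
      using parallelogram[OF gH gH, of n m] s by linarith
    also have "\<dots> = 4 * \<delta> * a + 2 * a * a + 4 * \<delta> * b + 2 * b * b" by (simp add: power2_eq_square algebra_simps)
    also have "\<dots> \<le> 4 * \<delta> * a + 2 * a + 4 * \<delta> * b + 2 * b"
      using a01 b01 by (intro add_mono mult_left_le) simp_all
    also have "\<dots> = (4 * \<delta> + 2) * (a + b)" by (simp add: algebra_simps)
    finally show ?thesis unfolding a_def b_def .
  qed
  have cauchy: "\<forall>e>0. \<exists>N. \<forall>m\<ge>N. \<forall>n\<ge>N. hnorm ip (\<lambda>z. g m z - g n z) < e"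
  proof (intro allI impI)
    fix e :: real assume e: "e > 0"
    obtain N where N: "inverse (real (Suc N)) < e^2 / (2 * (4 * \<delta> + 2))"
      using reals_Archimedean e \<delta>0 by (metis divide_pos_pos mult_pos_pos zero_less_numeral zero_less_power add_nonneg_pos mult_nonneg_nonneg zero_le_numeral zero_less_one)
    show "\<exists>N. \<forall>m\<ge>N. \<forall>n\<ge>N. hnorm ip (\<lambda>z. g m z - g n z) < e"
    proof (intro exI allI impI)
      fix m n assume mn: "N \<le> m" "N \<le> n"
      have i1: "inverse (real (Suc m)) \<le> inverse (real (Suc N))" using mn by (simp add: field_simps)
      have i2: "inverse (real (Suc n)) \<le> inverse (real (Suc N))" using mn by (simp add: field_simps)
      have pos: "0 < 4 * \<delta> + 2" using \<delta>0 by simp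
      have "nsq (\<lambda>z. g m z - g n z) \<le> (4 * \<delta> + 2) * (inverse (real (Suc m)) + inverse (real (Suc n)))"
        by (rule key)
      also have "\<dots> \<le> (4 * \<delta> + 2) * (2 * inverse (real (Suc N)))"
      proof (rule mult_left_mono)
        show "inverse (real (Suc m)) + inverse (real (Suc n)) \<le> 2 * inverse (real (Suc N))" using i1 i2 by linarith
        show "0 \<le> 4 * \<delta> + 2" using pos by linarith
      qed
      also have "\<dots> < (4 * \<delta> + 2) * (2 * (e^2 / (2 * (4 * \<delta> + 2))))"
        using N pos by (intro mult_strict_left_mono) simp_all
      also have "\<dots> = e^2" using pos by (simp add: field_simps)
      finally have "nsq (\<lambda>z. g m z - g n z) < e^2" .
      then have "sqrt (nsq (\<lambda>z. g m z - g n z)) < sqrt (e^2)" by (rule real_sqrt_less_mono)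
      then show "hnorm ip (\<lambda>z. g m z - g n z) < e" using e unfolding hnorm_nsq by simp
    qed
  qed
  obtain k0 where k0: "k0 \<in> H" "(\<lambda>n. hnorm ip (\<lambda>z. g n z - k0 z)) \<longlonglongrightarrow> 0"
    using complete_H[OF gH cauchy] by blast
  let ?y = "\<lambda>n. hnorm ip (\<lambda>z. g n z - k0 z)"
  have "norm (L k0 - 1) \<le> C * ?y n" for n
  proof -
    have "L k0 - 1 = - L (\<lambda>z. g n z - k0 z)" using Ldiff[OF gH k0(1)] gL by simp
    then have "norm (L k0 - 1) = norm (L (\<lambda>z. g n z - k0 z))" by simp
    also have "\<dots> \<le> C * ?y n" by (rule Lbdd[OF diff_H[OF gH k0(1)]])
    finally show ?thesis .
  qed
  moreover have "(\<lambda>n. C * ?y n) \<longlonglongrightarrow> 0" using tendsto_mult_right_zero[OF k0(2)] by simp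
  ultimately have "norm (L k0 - 1) \<le> 0" by (intro LIMSEQ_le_const[where X="\<lambda>n. C * ?y n"]) auto
  then have Lk0: "L k0 = 1" by simp
  have tri: "hnorm ip k0 \<le> hnorm ip (g n) + ?y n" for n
  proof -
    have "k0 = (\<lambda>z. g n z + (k0 z - g n z))" by (simp add: fun_eq_iff)
    then have "hnorm ip k0 \<le> hnorm ip (g n) + hnorm ip (\<lambda>z. k0 z - g n z)"
      using hnorm_triangle[OF gH[of n] diff_H[OF k0(1) gH[of n]]] by simp
    then show ?thesis using hnorm_diff_commute[OF gH k0(1)] by simp
  qed
  have "hnorm ip k0 \<le> \<delta> + inverse (real (Suc n)) + ?y n" for n
    using tri[of n] gn[of n] by linarith
  moreover have "(\<lambda>n. \<delta> + inverse (real (Suc n)) + ?y n) \<longlonglongrightarrow> \<delta> + 0 + 0"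
    by (intro tendsto_add tendsto_const LIMSEQ_inverse_real_of_nat k0(2))
  ultimately have k0min: "hnorm ip k0 \<le> \<delta>" by (intro LIMSEQ_le_const[where X="\<lambda>n. \<delta> + inverse (real (Suc n)) + ?y n"]) auto
  have nsqmin: "nsq k0 \<le> nsq h" if "h \<in> H" "L h = 1" for h
  proof -
    have "hnorm ip k0 \<le> hnorm ip h" using k0min \<delta>le[of h] that M_def by simp
    then show ?thesis using nsq_hnorm[OF k0(1)] nsq_hnorm[OF that(1)] hnorm_nonneg[OF k0(1)]
      by (simp add: power_mono)
  qed
  have orth: "ip k0 n = 0" if n: "n \<in> H" "L n = 0" for n
  proof -
    define A where "A = (norm (ip k0 n))^2"
    define s where "s = 1 / (nsq n + 1)"
    have s0: "s > 0" unfolding s_def using nsq_nonneg[OF n(1)] by simp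
    have sn: "s * nsq n < 1" unfolding s_def using nsq_nonneg[OF n(1)] by (simp add: field_simps)
    define t where "t = - (of_real s * ip k0 n)"
    have tn: "(\<lambda>z. t * n z) \<in> H" using n(1) by (rule smul_H)
    have "L (\<lambda>z. k0 z + t * n z) = 1" using Ladd[OF k0(1) tn] Lsmul[OF n(1)] n(2) Lk0 by simp
    then have i1: "nsq k0 \<le> nsq (\<lambda>z. k0 z + t * n z)" using nsqmin add_H[OF k0(1) tn] by simp
    have i2: "nsq (\<lambda>z. k0 z + t * n z) = nsq k0 + 2 * Re (ip k0 (\<lambda>z. t * n z)) + (norm t)^2 * nsq n"
      using nsq_add[OF k0(1) tn] nsq_smul[OF n(1)] by simp
    have aa: "cnj (ip k0 n) * ip k0 n = of_real A" unfolding A_def by (metis complex_norm_square mult.commute)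
    have i3: "ip k0 (\<lambda>z. t * n z) = - of_real (s * A)"
      unfolding ip_smul2[OF n(1) k0(1)] t_def by (simp add: mult.assoc aa)
    have i4: "(norm t)^2 = s^2 * A" unfolding t_def A_def using s0 by (simp add: norm_mult power_mult_distrib)
    have "0 \<le> - 2 * (s * A) + s^2 * A * nsq n" using i1 i2 i3 i4 by simp

    then have "0 \<le> s * (A * (s * nsq n - 2))" by (simp add: algebra_simps power2_eq_square)
    then have "0 \<le> A * (s * nsq n - 2)" using s0 by (simp add: zero_le_mult_iff)
    moreover have "A \<ge> 0" unfolding A_def by simp
    moreover have "s * nsq n - 2 < 0" using sn by linarith
    ultimately have "A * (s * nsq n - 2) = 0" by (smt (verit) mult_nonneg_nonpos)
    then have "A = 0" using \<open>s * nsq n - 2 < 0\<close> by simp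
    then show ?thesis unfolding A_def by simp
  qed
  have k0nz: "k0 \<noteq> (\<lambda>_. 0)" using Lk0 L0 by auto
  define q where "q = ip k0 k0"
  have q: "q = of_real (nsq k0)" unfolding q_def by (rule ip_self_nsq[OF k0(1)])
  have q0: "q \<noteq> 0" unfolding q_def using ip_def0[OF k0(1)] k0nz by blast
  have rep: "ip f k0 = L f * q" if f: "f \<in> H" for f
  proof -
    have lk: "(\<lambda>z. L f * k0 z) \<in> H" using k0(1) by (rule smul_H)
    have "L (\<lambda>z. f z - L f * k0 z) = 0" using Ldiff[OF f lk] Lsmul[OF k0(1)] Lk0 by simp
    then have "ip k0 (\<lambda>z. f z - L f * k0 z) = 0" using orth diff_H[OF f lk] by blast
    then have "ip k0 f - cnj (L f) * q = 0" using ip_diff2[OF f lk k0(1)] ip_smul2[OF k0(1) k0(1)] q_def by simp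
    then have "ip k0 f = cnj (L f) * q" by simp
    then have "cnj (ip k0 f) = L f * cnj q" by simp
    moreover have "cnj q = q" using q by simp
    ultimately show ?thesis using ip_sym[OF k0(1) f] by simp
  qed
  define k where "k = (\<lambda>z. (1 / cnj q) * k0 z)"
  have kH: "k \<in> H" unfolding k_def using k0(1) by (rule smul_H)
  have "L f = ip f k" if f: "f \<in> H" for f
  proof -
    have "ip f k = cnj (1 / cnj q) * ip f k0" unfolding k_def by (rule ip_smul2[OF k0(1) f])
    also have "\<dots> = L f" using rep[OF f] q0 by simp
    finally show ?thesis by simp
  qed
  then show ?thesis using kH by blast
qed

end


context ahs begin

definition dH where "dH f g = (if f \<in> H \<and> g \<in> H then hnorm ip (\<lambda>z. f z - g z) else 0)"

lemma ms: "Metric_space H dH"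
proof
  fix x y show "0 \<le> dH x y" unfolding dH_def using hnorm_nonneg diff_H by auto
next
  fix x y show "dH x y = dH y x" unfolding dH_def using hnorm_diff_commute by auto
next
  fix x y assume xy: "x \<in> H" "y \<in> H"
  have "(\<lambda>z. x z - y z) = (\<lambda>_. 0) \<longleftrightarrow> x = y" by (auto simp: fun_eq_iff)
  then show "dH x y = 0 \<longleftrightarrow> x = y" unfolding dH_def using xy hnorm_zero_iff[OF diff_H[OF xy]] by simp
next
  fix x y z assume "x \<in> H" "y \<in> H" "z \<in> H"
  then show "dH x z \<le> dH x y + dH y z" unfolding dH_def using hnorm_diff_triangle by simp
qed

interpretation M: Metric_space H dH by (rule ms)

lemma mcompl: "M.mcomplete"
  unfolding M.mcomplete_def
proof (intro allI impI)
  fix \<sigma> assume c: "M.MCauchy \<sigma>"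
  then have sH: "\<And>n. \<sigma> n \<in> H" unfolding M.MCauchy_def by auto
  have "\<forall>e>0. \<exists>N. \<forall>m\<ge>N. \<forall>n\<ge>N. hnorm ip (\<lambda>z. \<sigma> m z - \<sigma> n z) < e"
  proof (intro allI impI)
    fix e :: real assume "e > 0"
    then obtain N where "\<forall>n n'. N \<le> n \<longrightarrow> N \<le> n' \<longrightarrow> dH (\<sigma> n) (\<sigma> n') < e"
      using c unfolding M.MCauchy_def by blast
    then show "\<exists>N. \<forall>m\<ge>N. \<forall>n\<ge>N. hnorm ip (\<lambda>z. \<sigma> m z - \<sigma> n z) < e"
      unfolding dH_def using sH by auto
  qed
  then obtain f where f: "f \<in> H" "(\<lambda>n. hnorm ip (\<lambda>z. \<sigma> n z - f z)) \<longlonglongrightarrow> 0"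
    using complete_H[of \<sigma>] sH by blast
  have "limitin M.mtopology \<sigma> f sequentially"
    unfolding M.limitin_metric
  proof (intro conjI allI impI)
    show "f \<in> H" by fact
    fix e :: real assume e: "e > 0"
    have "\<forall>\<^sub>F n in sequentially. hnorm ip (\<lambda>z. \<sigma> n z - f z) < e"
      using order_tendstoD(2)[OF f(2) e] .
    then show "\<forall>\<^sub>F n in sequentially. \<sigma> n \<in> H \<and> dH (\<sigma> n) f < e"
      by eventually_elim (simp add: dH_def sH f(1))
  qed
  then show "\<exists>x. limitin M.mtopology \<sigma> x sequentially" by blast
qed

lemma pev_abs: "w \<in> \<Omega> \<Longrightarrow> \<exists>C\<ge>0. \<forall>f\<in>H. norm (f w) \<le> C * hnorm ip f"
proof -
  assume "w \<in> \<Omega>"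
  then obtain C where C: "\<forall>f\<in>H. norm (f w) \<le> C * hnorm ip f" using pev by blast
  have "norm (f w) \<le> \<bar>C\<bar> * hnorm ip f" if "f \<in> H" for f
    using C that hnorm_nonneg[OF that] by (smt (verit, best) mult_right_mono abs_ge_self)
  then show ?thesis by (intro exI[of _ "\<bar>C\<bar>"]) auto
qed

lemma loc_bdd:
  assumes w0: "w0 \<in> \<Omega>"
  shows "\<exists>r>0. cball w0 r \<subseteq> \<Omega> \<and> (\<exists>C. \<forall>f\<in>H. \<forall>w\<in>cball w0 r. norm (f w) \<le> C * hnorm ip f)"
proof -
  obtain r where r: "r > 0" "cball w0 r \<subseteq> \<Omega>" using open_contains_cball A_open w0 by blast
  define K where "K = cball w0 r"
  define F where "F n = {f \<in> H. \<forall>w\<in>K. norm (f w) \<le> real n}" for n :: nat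
  have closed: "closedin M.mtopology (F n)" for n
    unfolding M.metric_closedin_iff_sequentially_closed
  proof (intro conjI allI impI)
    show "F n \<subseteq> H" unfolding F_def by auto
    fix \<sigma> l assume a: "range \<sigma> \<subseteq> F n \<and> limitin M.mtopology \<sigma> l sequentially"
    then have lH: "l \<in> H" and conv: "\<And>e. e > 0 \<Longrightarrow> \<forall>\<^sub>F k in sequentially. \<sigma> k \<in> H \<and> dH (\<sigma> k) l < e"
      unfolding M.limitin_metric by auto
    have sF: "\<sigma> k \<in> F n" for k using a by auto
    have "norm (l w) \<le> real n" if w: "w \<in> K" for w
    proof (rule ccontr)
      assume "\<not> ?thesis"
      then have gt: "norm (l w) - real n > 0" by simp
      obtain C where C: "C \<ge> 0" "\<forall>f\<in>H. norm (f w) \<le> C * hnorm ip f"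
        using pev_abs[of w] w r unfolding K_def by blast
      define e where "e = (norm (l w) - real n) / (C + 1)"
      have e: "e > 0" unfolding e_def using gt C by simp
      obtain k where k: "\<sigma> k \<in> H" "dH (\<sigma> k) l < e" using eventually_happens'[OF _ conv[OF e]] by auto
      have "norm (\<sigma> k w - l w) \<le> C * hnorm ip (\<lambda>z. \<sigma> k z - l z)"
        using C(2)[rule_format, OF diff_H[OF k(1) lH]] by simp
      also have "\<dots> \<le> C * e" using k lH C(1) unfolding dH_def by (simp add: mult_left_mono)
      also have "\<dots> < norm (l w) - real n" unfolding e_def using gt C(1)
        by (simp add: field_simps)
      finally have "norm (\<sigma> k w - l w) < norm (l w) - real n" .
      moreover have "norm (\<sigma> k w) \<le> real n" using sF[of k] w unfolding F_def by auto
      moreover have "norm (l w) \<le> norm (\<sigma> k w) + norm (\<sigma> k w - l w)" using norm_triangle_ineq4[of "\<sigma> k w" "\<sigma> k w - l w"] by simp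
      ultimately show False by linarith
    qed
    then show "l \<in> F n" unfolding F_def using lH by auto
  qed
  have union: "\<Union> (range F) = H"
  proof
    show "\<Union> (range F) \<subseteq> H" unfolding F_def by auto
    show "H \<subseteq> \<Union> (range F)"
    proof
      fix f assume f: "f \<in> H"
      have "continuous_on K f" unfolding K_def
        using holomorphic_on_imp_continuous_on[OF hol_H[OF f]] r(2) continuous_on_subset by blast
      then have "compact (f ` K)" unfolding K_def by (intro compact_continuous_image) auto
      then obtain B where B: "\<forall>x\<in>f ` K. norm x \<le> B" using compact_imp_bounded bounded_iff by metis
      have "\<forall>w\<in>K. norm (f w) \<le> real (nat \<lceil>B\<rceil>)"
        using B by (smt (verit) image_eqI of_nat_nat real_nat_ceiling_ge)
      then show "f \<in> \<Union> (range F)" unfolding F_def using f by blast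
    qed
  qed
  have "\<exists>n. M.mtopology interior_of (F n) \<noteq> {}"
  proof (rule ccontr)
    assume "\<not> ?thesis"
    then have "M.mtopology interior_of \<Union> (range F) = {}"
      using M.metric_Baire_category_alt[OF mcompl, of "range F"] closed by auto
    then have "M.mtopology interior_of H = {}" using union by simp
    moreover have "M.mtopology interior_of H = H"
      using interior_of_topspace[of M.mtopology] M.topspace_mtopology by simp
    ultimately show False using zero_H by blast
  qed
  then obtain n x where x: "x \<in> M.mtopology interior_of (F n)" by blast
  then obtain T where T: "openin M.mtopology T" "x \<in> T" "T \<subseteq> F n" unfolding interior_of_def by blast
  then obtain \<rho> where \<rho>: "\<rho> > 0" "M.mball x \<rho> \<subseteq> T" using M.openin_mtopology by blast
  have xF: "x \<in> F n" using T by auto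
  then have xH: "x \<in> H" unfolding F_def by simp
  have bound: "norm (g w) \<le> (4 * real n / \<rho>) * hnorm ip g" if g: "g \<in> H" and w: "w \<in> K" for g w
  proof (cases "g = (\<lambda>_. 0)")
    case True then show ?thesis by simp
  next
    case False
    have hg: "hnorm ip g > 0" using hnorm_zero_iff[OF g] hnorm_nonneg[OF g] False by simp
    define t where "t = \<rho> / (2 * hnorm ip g)"
    have t: "t > 0" unfolding t_def using \<rho> hg by simp
    define h where "h = (\<lambda>z. x z + complex_of_real t * g z)"
    have tg: "(\<lambda>z. complex_of_real t * g z) \<in> H" using g by (rule smul_H)
    have hH: "h \<in> H" unfolding h_def using xH tg by (rule add_H)
    have eq: "(\<lambda>z. x z - h z) = (\<lambda>z. complex_of_real (- t) * g z)" unfolding h_def by (simp add: fun_eq_iff)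
    have "dH x h = hnorm ip (\<lambda>z. x z - h z)" unfolding dH_def using xH hH by simp
    also have "\<dots> = hnorm ip (\<lambda>z. complex_of_real (- t) * g z)" by (simp only: eq)
    also have "\<dots> = norm (complex_of_real (- t)) * hnorm ip g" by (rule hnorm_smul[OF g])
    also have "\<dots> = t * hnorm ip g" using t by simp
    also have "\<dots> = \<rho> / 2" unfolding t_def using hg by simp
    finally have "h \<in> M.mball x \<rho>" using xH hH \<rho> by simp
    then have "h \<in> F n" using \<rho> T by auto
    then have hw: "norm (h w) \<le> real n" using w unfolding F_def by auto
    have xw: "norm (x w) \<le> real n" using xF w unfolding F_def by auto
    have "t * norm (g w) = norm (h w - x w)" unfolding h_def using t by (simp add: norm_mult)
    also have "\<dots> \<le> 2 * real n" using hw xw norm_triangle_ineq4[of "h w" "x w"] by simp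
    finally have "norm (g w) \<le> 2 * real n / t" using t by (simp add: field_simps)
    also have "\<dots> = (4 * real n / \<rho>) * hnorm ip g" unfolding t_def using \<rho> hg by (simp add: field_simps)
    finally show ?thesis .
  qed
  show ?thesis using r bound unfolding K_def by blast
qed

lemma deriv_bdd: assumes b: "\<beta> \<in> \<Omega>" shows "\<exists>C. \<forall>f\<in>H. norm ((deriv ^^ m) f \<beta>) \<le> C * hnorm ip f"
proof -
  obtain r C where r: "r > 0" "cball \<beta> r \<subseteq> \<Omega>" and C: "\<forall>f\<in>H. \<forall>w\<in>cball \<beta> r. norm (f w) \<le> C * hnorm ip f"
    using loc_bdd[OF b] by blast
  have "norm ((deriv ^^ m) f \<beta>) \<le> (fact m * C / r ^ m) * hnorm ip f" if f: "f \<in> H" for f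
  proof -
    have hol: "f holomorphic_on ball \<beta> r"
      using hol_H[OF f] r(2) ball_subset_cball holomorphic_on_subset by blast
    have cont: "continuous_on (cball \<beta> r) f"
      using holomorphic_on_imp_continuous_on[OF hol_H[OF f]] r(2) continuous_on_subset by blast
    have "norm ((deriv ^^ m) f \<beta>) \<le> fact m * (C * hnorm ip f) / r ^ m"
      by (rule Cauchy_inequality[OF hol cont r(1)]) (use C f in \<open>auto simp: dist_norm\<close>)
    then show ?thesis by simp
  qed
  then show ?thesis by blast
qed

lemma deriv_repr: assumes b: "\<beta> \<in> \<Omega>" shows "\<exists>k\<in>H. \<forall>f\<in>H. (deriv ^^ m) f \<beta> = ip f k"
proof -
  obtain C where C: "\<forall>f\<in>H. norm ((deriv ^^ m) f \<beta>) \<le> C * hnorm ip f" using deriv_bdd[OF b] by blast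
  show ?thesis
  proof (rule riesz)
    fix f g assume "f \<in> H" "g \<in> H"
    then show "(deriv ^^ m) (\<lambda>z. f z + g z) \<beta> = (deriv ^^ m) f \<beta> + (deriv ^^ m) g \<beta>"
      using higher_deriv_add[OF hol_H hol_H A_open b] by blast
  next
    fix c f assume "f \<in> H"
    then show "(deriv ^^ m) (\<lambda>z. c * f z) \<beta> = c * (deriv ^^ m) f \<beta>"
      using higher_deriv_cmult[OF hol_H b A_open] by blast
  next
    fix f assume "f \<in> H" then show "norm ((deriv ^^ m) f \<beta>) \<le> C * hnorm ip f" using C by blast
  qed
qed

lemma deriv_polyH: assumes b: "\<beta> \<in> \<Omega>" shows "(deriv ^^ m) (polyH \<Omega> p) \<beta> = poly ((pderiv ^^ m) p) \<beta>"
proof -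
  have "(deriv ^^ m) (polyH \<Omega> p) \<beta> = (deriv ^^ m) (poly p) \<beta>"
    by (rule higher_deriv_transform_within_open[OF hol_H[OF polyH_H] _ A_open b])
       (auto simp: polyH_def intro: holomorphic_intros)
  then show ?thesis by (simp add: higher_deriv_poly)
qed

end

context ahs begin

lemma orth_kill:
  assumes I: "finite I" and K: "\<And>p. p \<in> I \<Longrightarrow> K p \<in> H"
    and x: "x = (\<lambda>z. \<Sum>p\<in>I. e p * K p z)" and o: "\<And>p. p \<in> I \<Longrightarrow> ip x (K p) = 0"
  shows "x = (\<lambda>_. 0)"
proof -
  have xH: "x \<in> H" unfolding x using I K by (rule sum_H)
  have "ip x x = (\<Sum>p\<in>I. cnj (e p) * ip x (K p))"
    using ip_sum2[where c=e, OF I K xH] x by simp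
  also have "\<dots> = 0" using o by simp
  finally show ?thesis using ip_def0[OF xH] by simp
qed

lemma gram_dep:
  assumes P: "distinct P" and K: "\<And>p. p \<in> set P \<Longrightarrow> K p \<in> H"
    and G: "ldet (length P) (\<lambda>r j. ip (K (P!r)) (K (P!j))) = 0"
  shows "depS K (set P)"
proof -
  define N where "N = length P"
  let ?A = "Matrix.mat N N (\<lambda>(i,j). ip (K (P!i)) (K (P!j)))"
  have A: "?A \<in> carrier_mat N N" by simp
  have "Determinant.det ?A = 0" using G unfolding ldet_eq N_def by simp
  then obtain v where v: "v \<in> carrier_vec N" "v \<noteq> 0\<^sub>v N" "?A *\<^sub>v v = 0\<^sub>v N"
    using det_0_iff_vec_prod_zero[OF A] by blast
  have rows: "(\<Sum>j<N. ip (K (P!r)) (K (P!j)) * v$j) = 0" if r: "r < N" for r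
  proof -
    have "(?A *\<^sub>v v) $ r = 0" using v(3) r by simp
    then show ?thesis using r v(1) by (simp add: scalar_prod_def Matrix.row_def atLeast0LessThan)
  qed
  define f where "f = inv_into {..<N} ((!) P)"
  define e where "e p = cnj (v $ f p)" for p
  define x where "x = (\<lambda>z. \<Sum>p\<in>set P. e p * K p z)"
  have orth: "ip x (K p) = 0" if p: "p \<in> set P" for p
  proof -
    have xH: "x \<in> H" unfolding x_def by (rule sum_H) (simp_all add: K)
    have "ip (K p) x = (\<Sum>q\<in>set P. cnj (e q) * ip (K p) (K q))"
      unfolding x_def by (rule ip_sum2) (simp_all add: K p)
    also have "\<dots> = (\<Sum>j<N. cnj (e (P!j)) * ip (K p) (K (P!j)))"
      using sum_set_nth[OF P] N_def by simp
    also have "\<dots> = (\<Sum>j<N. ip (K (P!(f p))) (K (P!j)) * v$j)"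
      using inv_nth[OF P p] inv_nth2[OF P] unfolding e_def f_def N_def
      by (intro sum.cong) (simp_all add: mult.commute)
    also have "\<dots> = 0" using rows inv_nth(1)[OF P p] unfolding f_def N_def by simp
    finally have "ip (K p) x = 0" .
    then show ?thesis using ip_sym[OF K[OF p] xH] by simp
  qed
  have x0: "x = (\<lambda>_. 0)" by (rule orth_kill[OF _ K x_def orth]) simp_all
  have "\<exists>j<N. v $ j \<noteq> 0"
  proof (rule ccontr)
    assume "\<not> ?thesis"
    then have "v = 0\<^sub>v N" using v(1) by (intro eq_vecI) auto
    then show False using v(2) by simp
  qed
  then obtain j where j: "j < N" "v $ j \<noteq> 0" by blast
  have "P!j \<in> set P" using j N_def by simp
  moreover have "e (P!j) \<noteq> 0" using j inv_nth2[OF P, of j] unfolding e_def f_def N_def by simp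
  moreover have "(\<lambda>z. \<Sum>p\<in>set P. e p * K p z) = (\<lambda>_. 0)" using x0 x_def by simp
  ultimately show ?thesis unfolding depS_def by blast
qed

lemma dep_gram:
  assumes P: "distinct P" and K: "\<And>p. p \<in> set P \<Longrightarrow> K p \<in> H"
    and d: "depS K (set P)"
  shows "ldet (length P) (\<lambda>r j. ip (K (P!r)) (K (P!j))) = 0"
proof -
  define N where "N = length P"
  let ?A = "Matrix.mat N N (\<lambda>(i,j). ip (K (P!i)) (K (P!j)))"
  have A: "?A \<in> carrier_mat N N" by simp
  obtain e where e: "\<exists>p\<in>set P. e p \<noteq> 0" "(\<lambda>z. \<Sum>p\<in>set P. e p * K p z) = (\<lambda>_. 0)"
    using d unfolding depS_def by blast
  define v where "v = Matrix.vec N (\<lambda>j. cnj (e (P!j)))"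
  have vc: "v \<in> carrier_vec N" unfolding v_def by simp
  have vnz: "v \<noteq> 0\<^sub>v N"
  proof
    assume v0: "v = 0\<^sub>v N"
    obtain p where p: "p \<in> set P" "e p \<noteq> 0" using e(1) by blast
    let ?j = "inv_into {..<length P} ((!) P) p"
    have "v $ ?j = cnj (e p)" using inv_nth[OF P p(1)] unfolding v_def N_def by simp
    moreover have "v $ ?j = 0" using v0 inv_nth[OF P p(1)] N_def by simp
    ultimately show False using p(2) by simp
  qed
  have "?A *\<^sub>v v = 0\<^sub>v N"
  proof (rule eq_vecI)
    fix r assume r: "r < dim_vec (0\<^sub>v N :: complex vec)"
    then have r': "r < N" by simp
    have "(?A *\<^sub>v v) $ r = (\<Sum>j<N. cnj (e (P!j)) * ip (K (P!r)) (K (P!j)))"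
      using r' by (simp add: v_def scalar_prod_def Matrix.row_def atLeast0LessThan mult.commute)
    also have "\<dots> = (\<Sum>q\<in>set P. cnj (e q) * ip (K (P!r)) (K q))"
      using sum_set_nth[OF P, of "\<lambda>q. cnj (e q) * ip (K (P!r)) (K q)"] N_def by simp
    also have "\<dots> = ip (K (P!r)) (\<lambda>z. \<Sum>p\<in>set P. e p * K p z)"
      using r' N_def by (intro ip_sum2[symmetric]) (simp_all add: K)
    also have "\<dots> = 0" using e(2) r' N_def K[of "P!r"] by simp
    finally show "(?A *\<^sub>v v) $ r = 0\<^sub>v N $ r" using r' by simp
  qed simp
  then have "Determinant.det ?A = 0" using det_0_iff_vec_prod_zero[OF A] vc vnz by blast
  then show ?thesis unfolding ldet_eq N_def by simp
qed

lemma fd_H: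
  assumes u: "u \<in> H" and vs: "\<And>v. v \<in> set vs \<Longrightarrow> v \<in> H"
  shows "formal_det ip u vs \<in> H"
proof -
  have w: "(u # vs) ! i \<in> H" if "i \<le> length vs" for i
    using that u vs by (cases i) auto
  show ?thesis unfolding formal_det_def Let_def
    by (rule sum_H) (simp_all add: w)
qed

lemma fd_orth:
  assumes u: "u \<in> H" and vs: "\<And>v. v \<in> set vs \<Longrightarrow> v \<in> H" and j0: "j0 < length vs"
  shows "ip (formal_det ip u vs) (vs ! j0) = 0"
proof -
  define N where "N = length vs"
  define w where "w = (\<lambda>i. (u # vs) ! i)"
  have w: "w i \<in> H" if "i \<le> N" for i
    using that u vs unfolding w_def N_def by (cases i) auto
  have v0: "vs ! j0 \<in> H" using vs j0 by simp
  have "ip (formal_det ip u vs) (vs ! j0) =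
     (\<Sum>i\<le>N. ((-1)^i * ldet N (\<lambda>r j. ip (w (if r < i then r else Suc r)) (vs ! j))) * ip (w i) (vs ! j0))"
    unfolding formal_det_def Let_def N_def[symmetric] w_def[symmetric]
    by (rule ip_sum) (simp_all add: w v0)
  also have "\<dots> = 0"
    using cofactor_expansion_zero[of j0 N "\<lambda>i j. ip (w i) (vs ! j)"] j0 N_def by simp
  finally show ?thesis .
qed

lemma fd_split:
  "formal_det ip u vs = (\<lambda>z. ldet (length vs) (\<lambda>r j. ip (vs!r) (vs!j)) * u z +
      (\<Sum>j<length vs. ((-1)^(Suc j) * ldet (length vs) (\<lambda>r c. ip ((u#vs) ! (if r < Suc j then r else Suc r)) (vs!c))) * (vs!j) z))"
  unfolding formal_det_def Let_def
  by (simp add: lessThan_Suc_atMost[symmetric] sum.lessThan_Suc_shift del: sum.lessThan_Suc)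

end


context ahs begin

lemma ip_poly_unique:
  assumes k: "k \<in> H" and k': "k' \<in> H" and eq: "\<And>p. ip (polyH \<Omega> p) k = ip (polyH \<Omega> p) k'"
  shows "k = k'"
proof -
  define e where "e = (\<lambda>z. k z - k' z)"
  have eH: "e \<in> H" unfolding e_def using k k' by (rule diff_H)
  have pe: "ip (polyH \<Omega> p) e = 0" for p unfolding e_def using ip_diff2[OF k k' polyH_H] eq by simp
  have small: "nsq e \<le> \<epsilon> * hnorm ip e" if \<epsilon>: "\<epsilon> > 0" for \<epsilon>
  proof -
    obtain p where p: "hnorm ip (\<lambda>z. e z - polyH \<Omega> p z) < \<epsilon>" using dense_H[OF eH \<epsilon>] by blast
    have ep: "(\<lambda>z. e z - polyH \<Omega> p z) \<in> H" using eH polyH_H by (rule diff_H)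
    have "ip e e = ip (\<lambda>z. e z - polyH \<Omega> p z) e + ip (polyH \<Omega> p) e"
      using ip_diff[OF eH polyH_H eH] by simp
    then have "ip e e = ip (\<lambda>z. e z - polyH \<Omega> p z) e" using pe by simp
    then have "nsq e \<le> norm (ip (\<lambda>z. e z - polyH \<Omega> p z) e)"
      unfolding nsq_def by (metis complex_Re_le_cmod)
    also have "\<dots> \<le> hnorm ip (\<lambda>z. e z - polyH \<Omega> p z) * hnorm ip e" by (rule cauchy_schwarz[OF ep eH])
    also have "\<dots> \<le> \<epsilon> * hnorm ip e" using p hnorm_nonneg[OF eH] by (simp add: mult_right_mono)
    finally show ?thesis .
  qed
  have "hnorm ip e = 0"
  proof (rule ccontr)
    assume ne: "hnorm ip e \<noteq> 0"
    then have pos: "hnorm ip e > 0" using hnorm_nonneg[OF eH] by simp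
    have "(hnorm ip e)^2 \<le> (hnorm ip e / 2) * hnorm ip e"
      using small[of "hnorm ip e / 2"] pos nsq_hnorm[OF eH] by simp
    then show False using pos by (simp add: power2_eq_square)
  qed
  then have "e = (\<lambda>_. 0)" using hnorm_zero_iff[OF eH] by simp
  then show ?thesis unfolding e_def by (simp add: fun_eq_iff)
qed

lemma kern_eq:
  assumes k: "k \<in> H" and rep: "\<And>p. ip (polyH \<Omega> p) k = poly ((pderiv ^^ m) p) \<beta>"
  shows "kern \<Omega> H ip \<beta> m = k"
  unfolding kern_def
proof (rule the_equality)
  show "k \<in> H \<and> (\<forall>p. ip (polyH \<Omega> p) k = poly ((pderiv ^^ m) p) \<beta>)" using k rep by simp
next
  fix k' assume "k' \<in> H \<and> (\<forall>p. ip (polyH \<Omega> p) k' = poly ((pderiv ^^ m) p) \<beta>)"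
  then show "k' = k" using ip_poly_unique[of k' k] k rep by simp
qed

lemma repro_kern: assumes "reproducible_order \<Omega> H ip \<beta> m" shows "kern \<Omega> H ip \<beta> m \<in> H"
proof -
  obtain L where Ladd: "\<forall>f\<in>H. \<forall>g\<in>H. L (\<lambda>z. f z + g z) = L f + L g"
    and Lsmul: "\<forall>c. \<forall>f\<in>H. L (\<lambda>z. c * f z) = c * L f"
    and Lbdd: "\<exists>C. \<forall>f\<in>H. norm (L f) \<le> C * hnorm ip f"
    and Lp: "\<forall>p. L (polyH \<Omega> p) = poly ((pderiv ^^ m) p) \<beta>"
    using assms unfolding reproducible_order_def by blast
  obtain C where C: "\<forall>f\<in>H. norm (L f) \<le> C * hnorm ip f" using Lbdd by blast
  obtain k where k: "k \<in> H" "\<forall>f\<in>H. L f = ip f k"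
    using riesz[of L C] Ladd Lsmul C by blast
  have "kern \<Omega> H ip \<beta> m = k" by (rule kern_eq[OF k(1)]) (use k(2) Lp polyH_H in auto)
  then show ?thesis using k(1) by simp
qed

lemma kern_deriv: assumes b: "\<beta> \<in> \<Omega>"
  shows "kern \<Omega> H ip \<beta> m \<in> H" and "\<And>f. f \<in> H \<Longrightarrow> (deriv ^^ m) f \<beta> = ip f (kern \<Omega> H ip \<beta> m)"
proof -
  obtain k where k: "k \<in> H" "\<forall>f\<in>H. (deriv ^^ m) f \<beta> = ip f k" using deriv_repr[OF b] by blast
  have kk: "kern \<Omega> H ip \<beta> m = k"
    by (rule kern_eq[OF k(1)]) (use k(2) deriv_polyH[OF b] polyH_H in metis)
  show "kern \<Omega> H ip \<beta> m \<in> H" using kk k by simp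
  show "\<And>f. f \<in> H \<Longrightarrow> (deriv ^^ m) f \<beta> = ip f (kern \<Omega> H ip \<beta> m)" using kk k by simp
qed

lemma repro_Suc: assumes "reproducible_order \<Omega> H ip \<beta> (Suc m)" shows "reproducible_order \<Omega> H ip \<beta> m"
proof -
  obtain L where Ladd: "\<forall>f\<in>H. \<forall>g\<in>H. L (\<lambda>z. f z + g z) = L f + L g"
    and Lsmul: "\<forall>c. \<forall>f\<in>H. L (\<lambda>z. c * f z) = c * L f"
    and Lbdd: "\<exists>C. \<forall>f\<in>H. norm (L f) \<le> C * hnorm ip f"
    and Lp: "\<forall>p. L (polyH \<Omega> p) = poly ((pderiv ^^ Suc m) p) \<beta>"
    using assms unfolding reproducible_order_def by blast
  obtain C where C: "\<forall>f\<in>H. norm (L f) \<le> C * hnorm ip f" using Lbdd by blast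
  obtain Cs where Cs: "\<forall>f\<in>H. hnorm ip (\<lambda>z. z * f z) \<le> Cs * hnorm ip f" using shift_bdd by blast
  define L' where "L' f = (L (\<lambda>z. z * f z) - \<beta> * L f) / of_nat (Suc m)" for f
  have add': "L' (\<lambda>z. f z + g z) = L' f + L' g" if f: "f \<in> H" and g: "g \<in> H" for f g
  proof -
    have "(\<lambda>z. z * (f z + g z)) = (\<lambda>z. z * f z + z * g z)" by (simp add: fun_eq_iff algebra_simps)
    then have "L (\<lambda>z. z * (f z + g z)) = L (\<lambda>z. z * f z) + L (\<lambda>z. z * g z)"
      using Ladd shift_H[OF f] shift_H[OF g] by simp
    moreover have "L (\<lambda>z. f z + g z) = L f + L g" using Ladd f g by blast
    ultimately have "L' (\<lambda>z. f z + g z) = ((L (\<lambda>z. z * f z) - \<beta> * L f) + (L (\<lambda>z. z * g z) - \<beta> * L g)) / of_nat (Suc m)"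
      unfolding L'_def by (simp add: algebra_simps)
    then show ?thesis unfolding L'_def by (simp only: add_divide_distrib)
  qed
  have smul': "L' (\<lambda>z. c * f z) = c * L' f" if f: "f \<in> H" for c f
  proof -
    have "(\<lambda>z. z * (c * f z)) = (\<lambda>z. c * (z * f z))" by (simp add: fun_eq_iff algebra_simps)
    then have "L (\<lambda>z. z * (c * f z)) = c * L (\<lambda>z. z * f z)" using Lsmul shift_H[OF f] by simp
    moreover have "L (\<lambda>z. c * f z) = c * L f" using Lsmul f by blast
    ultimately show ?thesis unfolding L'_def by (simp add: field_simps)
  qed
  have bdd': "norm (L' f) \<le> ((\<bar>C\<bar> * \<bar>Cs\<bar> + norm \<beta> * \<bar>C\<bar>) / real (Suc m)) * hnorm ip f" if f: "f \<in> H" for f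
  proof -
    have hf: "0 \<le> hnorm ip f" by (rule hnorm_nonneg[OF f])
    have zf: "(\<lambda>z. z * f z) \<in> H" by (rule shift_H[OF f])
    have hzf: "0 \<le> hnorm ip (\<lambda>z. z * f z)" by (rule hnorm_nonneg[OF zf])
    have "norm (L (\<lambda>z. z * f z)) \<le> C * hnorm ip (\<lambda>z. z * f z)" using C zf by blast
    also have "\<dots> \<le> \<bar>C\<bar> * hnorm ip (\<lambda>z. z * f z)" using hzf by (simp add: mult_right_mono)
    also have "\<dots> \<le> \<bar>C\<bar> * (\<bar>Cs\<bar> * hnorm ip f)"
    proof (rule mult_left_mono)
      have "hnorm ip (\<lambda>z. z * f z) \<le> Cs * hnorm ip f" using Cs f by blast
      also have "\<dots> \<le> \<bar>Cs\<bar> * hnorm ip f" using hf by (simp add: mult_right_mono)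
      finally show "hnorm ip (\<lambda>z. z * f z) \<le> \<bar>Cs\<bar> * hnorm ip f" .
    qed simp
    finally have n1: "norm (L (\<lambda>z. z * f z)) \<le> \<bar>C\<bar> * \<bar>Cs\<bar> * hnorm ip f" by simp
    have "norm (L f) \<le> C * hnorm ip f" using C f by blast
    also have "\<dots> \<le> \<bar>C\<bar> * hnorm ip f" using hf by (simp add: mult_right_mono)
    finally have n2: "norm (\<beta> * L f) \<le> norm \<beta> * (\<bar>C\<bar> * hnorm ip f)"
      by (simp add: norm_mult mult_left_mono)
    have "norm (L (\<lambda>z. z * f z) - \<beta> * L f) \<le> norm (L (\<lambda>z. z * f z)) + norm (\<beta> * L f)"
      by (rule norm_triangle_ineq4)
    also have "\<dots> \<le> (\<bar>C\<bar> * \<bar>Cs\<bar> + norm \<beta> * \<bar>C\<bar>) * hnorm ip f"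
      using n1 n2 by (simp add: algebra_simps)
    finally have "norm (L (\<lambda>z. z * f z) - \<beta> * L f) \<le> (\<bar>C\<bar> * \<bar>Cs\<bar> + norm \<beta> * \<bar>C\<bar>) * hnorm ip f" .
    then have "norm (L (\<lambda>z. z * f z) - \<beta> * L f) / real (Suc m) \<le> (\<bar>C\<bar> * \<bar>Cs\<bar> + norm \<beta> * \<bar>C\<bar>) * hnorm ip f / real (Suc m)"
      by (rule divide_right_mono) simp
    moreover have "norm (L' f) = norm (L (\<lambda>z. z * f z) - \<beta> * L f) / real (Suc m)"
      unfolding L'_def by (simp only: norm_divide norm_of_nat)
    ultimately show ?thesis by simp
  qed
  have nz: "of_nat (Suc m) \<noteq> (0::complex)" by (simp only: of_nat_eq_0_iff)
  have poly': "L' (polyH \<Omega> p) = poly ((pderiv ^^ m) p) \<beta>" for p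
  proof -
    have "L (\<lambda>z. z * polyH \<Omega> p z) = L (polyH \<Omega> (pCons 0 p))" by (simp add: polyH_pCons0)
    also have "\<dots> = \<beta> * poly ((pderiv ^^ Suc m) p) \<beta> + of_nat (Suc m) * poly ((pderiv ^^ m) p) \<beta>"
      using Lp poly_pderiv_pow_pCons0 by simp
    finally show ?thesis unfolding L'_def using Lp nz by simp
  qed
  show ?thesis unfolding reproducible_order_def
    by (intro exI[of _ L'] conjI ballI allI add' smul' exI[of _ "(\<bar>C\<bar> * \<bar>Cs\<bar> + norm \<beta> * \<bar>C\<bar>) / real (Suc m)"] bdd' poly')
qed

lemma repro_le: assumes "reproducible_order \<Omega> H ip \<beta> m" "j \<le> m" shows "reproducible_order \<Omega> H ip \<beta> j"
  using assms(2,1)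
proof (induction rule: dec_induct)
  case base then show ?case .
next
  case (step n) then show ?case using repro_Suc by blast
qed

end



lemma ldet_cong: assumes "\<And>r j. r < N \<Longrightarrow> j < N \<Longrightarrow> a r j = b r j" shows "ldet N a = ldet N b"
  unfolding ldet_def
proof (rule sum.cong)
  fix \<sigma> assume "\<sigma> \<in> {\<sigma>. \<sigma> permutes {..<N}}"
  then have "\<sigma> i < N" if "i < N" for i using permutes_in_image[of \<sigma> "{..<N}" i] that by auto
  then show "of_int (sign \<sigma>) * (\<Prod>i<N. a i (\<sigma> i)) = of_int (sign \<sigma>) * (\<Prod>i<N. b i (\<sigma> i))"
    using assms by (intro arg_cong[where f="\<lambda>x. of_int (sign \<sigma>) * x"] prod.cong) auto
qed simp

context ahs begin

lemma fd_set:
  assumes P: "distinct P"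
  shows "\<exists>a. formal_det ip u (map K P) =
     (\<lambda>z. ldet (length P) (\<lambda>r j. ip (K (P!r)) (K (P!j))) * u z + (\<Sum>p\<in>set P. a p * K p z))"
proof -
  define N where "N = length P"
  define c where "c j = (-1)^(Suc j) * ldet N (\<lambda>r c. ip ((u # map K P) ! (if r < Suc j then r else Suc r)) (map K P ! c))" for j
  define f where "f = inv_into {..<N} ((!) P)"
  define a where "a p = c (f p)" for p
  have lc: "ldet N (\<lambda>r j. ip (map K P ! r) (map K P ! j)) = ldet N (\<lambda>r j. ip (K (P!r)) (K (P!j)))"
    by (rule ldet_cong) (simp add: N_def)
  have "formal_det ip u (map K P) = (\<lambda>z. ldet N (\<lambda>r j. ip (K (P!r)) (K (P!j))) * u z + (\<Sum>j<N. c j * K (P!j) z))"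
    unfolding fd_split N_def[symmetric] lc[symmetric] by (simp add: c_def N_def)
  also have "(\<lambda>z. \<Sum>j<N. c j * K (P!j) z) = (\<lambda>z. \<Sum>p\<in>set P. a p * K p z)"
  proof
    fix z
    have "(\<Sum>p\<in>set P. a p * K p z) = (\<Sum>j<N. a (P!j) * K (P!j) z)"
      using sum_set_nth[OF P] N_def by simp
    also have "\<dots> = (\<Sum>j<N. c j * K (P!j) z)"
      using inv_nth2[OF P] unfolding a_def f_def N_def by simp
    finally show "(\<Sum>j<N. c j * K (P!j) z) = (\<Sum>p\<in>set P. a p * K p z)" by simp
  qed
  finally show ?thesis unfolding N_def by (metis (no_types, lifting))
qed

lemma sum_extend:
  assumes "finite J" "I \<subseteq> J"
  shows "(\<Sum>p\<in>I. a p * K p z) = (\<Sum>p\<in>J. (if p \<in> I then a p else 0) * K p z :: complex)"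
  by (rule sum.mono_neutral_cong_right[OF assms, symmetric]) auto


lemma main:
  assumes rA: "reproducible_multiset \<Omega> H ip A" and rB: "reproducible_multiset \<Omega> H ip B"
    and AB: "A \<subseteq># B"
    and Z: "\<forall>\<beta>. enat (count B \<beta>) \<le> zero_mult \<Omega> H ip (shapiro_shields \<Omega> H ip A) \<beta>"
  shows "\<exists>c::complex. shapiro_shields \<Omega> H ip B = (\<lambda>z. c * shapiro_shields \<Omega> H ip A z)"
proof -
  define Kf where "Kf p = kern \<Omega> H ip (fst p) (snd p)" for p
  define PA where "PA = pairs A"
  define PB where "PB = pairs B"
  define mA where "mA = count A 0"
  define mB where "mB = count B 0"
  define SA where "SA = shapiro_shields \<Omega> H ip A"
  define SB where "SB = shapiro_shields \<Omega> H ip B"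
  have cAB: "count A \<beta> \<le> count B \<beta>" for \<beta> using AB by (simp add: subseteq_mset_def)
  have dA: "distinct PA" and dB: "distinct PB" unfolding PA_def PB_def by (simp_all add: distinct_pairs)
  have sA: "set PA = {(\<beta>, j). j < count A \<beta>}" and sB: "set PB = {(\<beta>, j). j < count B \<beta>}"
    unfolding PA_def PB_def by (simp_all add: set_pairs)
  have AsubB: "set PA \<subseteq> set PB" unfolding sA sB using cAB by (auto intro: less_le_trans)
  have fin: "finite (set PB)" by simp
  have mAB: "mA \<le> mB" unfolding mA_def mB_def by (rule cAB)
  have KH0: "kern \<Omega> H ip \<beta> j \<in> H" if "j < count B \<beta> \<or> \<beta> = 0" for \<beta> j
  proof (cases "\<beta> \<in> \<Omega>")
    case True then show ?thesis by (rule kern_deriv(1))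
  next
    case False
    then have b0: "\<beta> \<noteq> 0" using zero_in by auto
    then have j: "j < count B \<beta>" using that by simp
    then have "\<beta> \<in># B" using count_eq_zero_iff[of B \<beta>] by linarith
    then have "reproducible_order \<Omega> H ip \<beta> (count B \<beta> - 1)" using rB b0 unfolding reproducible_multiset_def by blast
    then have "reproducible_order \<Omega> H ip \<beta> j" by (rule repro_le) (use j in linarith)
    then show ?thesis by (rule repro_kern)
  qed
  have KB: "Kf p \<in> H" if "p \<in> set PB" for p using KH0 that unfolding sB Kf_def by auto
  have KA: "Kf p \<in> H" if "p \<in> set PA" for p using KB[of p] AsubB that by blast
  have uA: "Kf (0, mA) \<in> H" unfolding Kf_def using KH0 by simp
  have uB: "Kf (0, mB) \<in> H" unfolding Kf_def using KH0 by simp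
  have SAfd: "SA = formal_det ip (Kf (0, mA)) (map Kf PA)"
    unfolding SA_def shapiro_pairs PA_def Kf_def mA_def by simp
  have SBfd: "SB = formal_det ip (Kf (0, mB)) (map Kf PB)"
    unfolding SB_def shapiro_pairs PB_def Kf_def mB_def by simp
  have SAH: "SA \<in> H" unfolding SAfd by (rule fd_H[OF uA]) (use KA in auto)
  have SBH: "SB \<in> H" unfolding SBfd by (rule fd_H[OF uB]) (use KB in auto)
  define GA where "GA = ldet (length PA) (\<lambda>r j. ip (Kf (PA!r)) (Kf (PA!j)))"
  define GB where "GB = ldet (length PB) (\<lambda>r j. ip (Kf (PB!r)) (Kf (PB!j)))"
  obtain aA where SAe: "SA = (\<lambda>z. GA * Kf (0, mA) z + (\<Sum>p\<in>set PA. aA p * Kf p z))"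
    using fd_set[OF dA, of "Kf (0, mA)" Kf] unfolding SAfd GA_def by blast
  obtain aB where SBe: "SB = (\<lambda>z. GB * Kf (0, mB) z + (\<Sum>p\<in>set PB. aB p * Kf p z))"
    using fd_set[OF dB, of "Kf (0, mB)" Kf] unfolding SBfd GB_def by blast
  have oB: "ip SB (Kf p) = 0" if p: "p \<in> set PB" for p
  proof -
    let ?j = "inv_into {..<length PB} ((!) PB) p"
    have "ip SB (map Kf PB ! ?j) = 0" unfolding SBfd
      by (rule fd_orth[OF uB]) (use KB inv_nth[OF dB p] in auto)
    then show ?thesis using inv_nth[OF dB p] by simp
  qed
  have oA: "ip SA (Kf p) = 0" if p: "p \<in> set PB" for p
  proof -
    obtain \<beta> l where pl: "p = (\<beta>, l)" "l < count B \<beta>" using p sB by auto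
    have le: "enat (count B \<beta>) \<le> zero_mult \<Omega> H ip SA \<beta>" using Z SA_def by simp
    show ?thesis
    proof (cases "\<beta> \<in> \<Omega>")
      case True
      then have "enat (count B \<beta>) \<le> Sup {enat m | m. \<forall>l<m. (deriv ^^ l) SA \<beta> = 0}"
        using le unfolding zero_mult_def by simp
      from sup_enat_gt[OF this pl(2)] obtain m where "enat l < enat m" "\<forall>l<m. (deriv ^^ l) SA \<beta> = 0"
        by blast
      then have "(deriv ^^ l) SA \<beta> = 0" by simp
      then show ?thesis using kern_deriv(2)[OF True SAH] pl(1) unfolding Kf_def by simp
    next
      case False
      then have "enat (count B \<beta>) \<le> Sup {enat m | m. (m = 0 \<or> reproducible_order \<Omega> H ip \<beta> (m - 1)) \<and>
                            (\<forall>l<m. ext_deriv \<Omega> H ip SA \<beta> l = 0)}"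
        using le unfolding zero_mult_def by simp
      from sup_enat_gt[OF this pl(2)] obtain m where "enat l < enat m" "\<forall>l<m. ext_deriv \<Omega> H ip SA \<beta> l = 0"
        by blast
      then have "ext_deriv \<Omega> H ip SA \<beta> l = 0" by simp
      then show ?thesis using pl(1) unfolding Kf_def ext_deriv_def by simp
    qed
  qed
  have GB0: "SB = (\<lambda>_. 0)" if "GB = 0"
  proof (rule orth_kill[of "set PB" Kf SB aB])
    show "SB = (\<lambda>z. \<Sum>p\<in>set PB. aB p * Kf p z)" using SBe that by simp
  qed (simp_all add: KB oB)
  have GBdep: "GB = 0 \<longleftrightarrow> depS Kf (set PB)"
    using gram_dep[OF dB, of Kf] dep_gram[OF dB, of Kf] KB unfolding GB_def by blast
  have GAdep: "GA = 0 \<longleftrightarrow> depS Kf (set PA)"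
    using gram_dep[OF dA, of Kf] dep_gram[OF dA, of Kf] KA unfolding GA_def by blast
  show ?thesis
  proof (cases "mA = mB")
    case eq: True
    show ?thesis
    proof (cases "GB = 0")
      case True
      then show ?thesis using GB0 SB_def by (intro exI[of _ 0]) simp
    next
      case False
      have "\<not> depS Kf (set PB)" using GBdep False by blast
      then have "\<not> depS Kf (set PA)" using depS_mono[OF fin AsubB] by blast
      then have GA0: "GA \<noteq> 0" using GAdep by blast
      define x where "x = (\<lambda>z. SA z - (GA / GB) * SB z)"
      define aA' where "aA' p = (if p \<in> set PA then aA p else 0)" for p
      have "x = (\<lambda>z. \<Sum>p\<in>set PB. (aA' p - (GA / GB) * aB p) * Kf p z)"
      proof
        fix z
        have "x z = (\<Sum>p\<in>set PA. aA p * Kf p z) - (GA / GB) * (\<Sum>p\<in>set PB. aB p * Kf p z)"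
          unfolding x_def SAe SBe eq using False by (simp add: algebra_simps)
        also have "(\<Sum>p\<in>set PA. aA p * Kf p z) = (\<Sum>p\<in>set PB. aA' p * Kf p z)"
          unfolding aA'_def by (rule sum_extend[OF fin AsubB])
        finally show "x z = (\<Sum>p\<in>set PB. (aA' p - (GA / GB) * aB p) * Kf p z)"
          by (simp add: sum_distrib_left sum_subtractf[symmetric] algebra_simps)
      qed
      moreover have "ip x (Kf p) = 0" if p: "p \<in> set PB" for p
      proof -
        have "ip x (Kf p) = ip SA (Kf p) - ip (\<lambda>z. (GA / GB) * SB z) (Kf p)"
          unfolding x_def by (rule ip_diff[OF SAH smul_H[OF SBH] KB[OF p]])
        also have "\<dots> = ip SA (Kf p) - (GA / GB) * ip SB (Kf p)" by (simp only: ip_smul[OF SBH KB[OF p]])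
        finally show ?thesis using oA[OF p] oB[OF p] by simp
      qed
      ultimately have "x = (\<lambda>_. 0)" by (intro orth_kill[of "set PB" Kf x "\<lambda>p. aA' p - (GA / GB) * aB p"]) (simp_all add: KB)
      then have "SB z = (GB / GA) * SA z" for z unfolding x_def using GA0 False
        by (simp add: fun_eq_iff field_simps)
      then show ?thesis using SA_def SB_def by (intro exI[of _ "GB / GA"]) auto
    qed
  next
    case False
    then have lt: "mA < mB" using mAB by simp
    have u_in: "(0, mA) \<in> set PB" unfolding sB mB_def using lt mB_def by simp
    have u_out: "(0, mA) \<notin> set PA" unfolding sA mA_def by simp
    define I where "I = insert (0, mA) (set PA)"
    have IB: "I \<subseteq> set PB" unfolding I_def using u_in AsubB by simp
    define e where "e p = (if p = (0, mA) then GA else aA p)" for p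
    have SAI: "SA = (\<lambda>z. \<Sum>p\<in>I. e p * Kf p z)"
    proof
      fix z
      have "(\<Sum>p\<in>I. e p * Kf p z) = e (0, mA) * Kf (0, mA) z + (\<Sum>p\<in>set PA. e p * Kf p z)"
        unfolding I_def using u_out by simp
      also have "(\<Sum>p\<in>set PA. e p * Kf p z) = (\<Sum>p\<in>set PA. aA p * Kf p z)"
        using u_out unfolding e_def by (intro sum.cong) auto
      finally show "SA z = (\<Sum>p\<in>I. e p * Kf p z)" unfolding SAe e_def by simp
    qed
    define e' where "e' p = (if p \<in> I then e p else 0)" for p
    have "SA = (\<lambda>z. \<Sum>p\<in>set PB. e' p * Kf p z)"
      unfolding SAI e'_def by (rule ext, rule sum_extend[OF fin IB])
    then have SA0: "SA = (\<lambda>_. 0)"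
    proof (intro orth_kill[of "set PB" Kf SA e'])
      show "\<And>p. p \<in> set PB \<Longrightarrow> ip SA (Kf p) = 0" by (rule oA)
    qed (simp_all add: KB)
    have "depS Kf (set PB)"
    proof (cases "GA = 0")
      case True
      then have "depS Kf (set PA)" using GAdep by blast
      then show ?thesis using depS_mono[OF fin AsubB] by blast
    next
      case False
      have "depS Kf I" unfolding depS_def
      proof (intro exI[of _ e] conjI)
        show "\<exists>p\<in>I. e p \<noteq> 0" using False unfolding I_def e_def by auto
        show "(\<lambda>z. \<Sum>p\<in>I. e p * Kf p z) = (\<lambda>_. 0)" using SAI SA0 by simp
      qed
      then show ?thesis using depS_mono[OF fin IB] by blast
    qed
    then have "GB = 0" using GBdep by blast
    then have "SB = (\<lambda>_. 0)" by (rule GB0)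
    then show ?thesis using SB_def by (intro exI[of _ 0]) simp
  qed
qed

end

theorem mainTheorem15:
  fixes \<Omega> :: "complex set" and H :: "(complex \<Rightarrow> complex) set"
    and ip :: "(complex \<Rightarrow> complex) \<Rightarrow> (complex \<Rightarrow> complex) \<Rightarrow> complex"
    and A B :: "complex multiset"
  assumes "analytic_hilbert_space \<Omega> H ip"
    and "reproducible_multiset \<Omega> H ip A"
    and "reproducible_multiset \<Omega> H ip B"
    and "A \<subseteq># B"
    and "\<forall>\<beta>. enat (count B \<beta>) \<le> zero_mult \<Omega> H ip (shapiro_shields \<Omega> H ip A) \<beta>"
  shows "\<exists>c::complex. shapiro_shields \<Omega> H ip B = (\<lambda>z. c * shapiro_shields \<Omega> H ip A z)"
proof -
  interpret ahs \<Omega> H ip by unfold_locales (rule assms(1))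
  show ?thesis by (rule main[OF assms(2-5)])
qed

end
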